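(* Let $n\ge2$ and $k\in\mathbb{N}_0$. A function $u\in\mathcal{C}^\infty(\mathbb{R}^{n-1}\times\mathbb{S}^{n-1}_+)$ satisfies $u(\bar a,v)=R^kf((\bar a,0),v)$ for all $\bar a\in\mathbb{R}^{n-1}$, $v\in\mathbb{S}^{n-1}_+$, for some $f\in\mathcal{C}_c^\infty(\mathbb{R}^n_+)$, if and only if the scaled projective data \[ w(\bar a,\bar p):=v_n^{k+1}u(\bar a,v),\qquad \bar p=\bar v/v_n\in\mathbb{R}^{n-1},\ v=(\bar v,v_n)\in\mathbb{S}^{n-1}_+, \] and its Fourier transform $W(\bar a,\bar\xi)=\int_{\mathbb{R}^{n-1}}e^{-i\bar p\cdot\bar\xi}w(\bar a,\bar p)\,d\bar p$ satisfy: (i) (Compact support) for each fixed $\bar a\in\mathbb{R}^{n-1}$, $w(\bar a,\cdot)$ has compact support; (ii) (PDE condition) there is a function $H(\sigma,\bar\xi)$ on $\mathbb{R}\times\mathbb{R}^{n-1}$ with $W(\bar a,\bar\xi)=H(\bar a\cdot\bar\xi,\bar\xi)$; equivalently, $\bar b\cdot\nabla_{\bar a}W(\bar a,\bar\xi)=0$ for all $\bar b\in\mathbb{R}^{n-1}$ with $\bar b\cdot\bar\xi=0$; (iii) (Support and smoothness) the full inverse Fourier transform \[ h(t,\bar p):=\frac{1}{(2\pi)^n}\int_{\mathbb{R}^{n-1}}\int_{\mathbb{R}}e^{i(t\sigma+\bar p\cdot\bar\xi)}H(\sigma,\bar\xi)\,d\sigma\,d\bar\xi \] is a smooth function on $\mathbb{R}\times\mathbb{R}^{n-1}$,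 and there are constants $0<m_0<M_0<\infty$ and $R>0$ with $\operatorname{supp}h\subset\{(t,\bar p): t\in[-M_0,-m_0],\ |\bar p|\le -Rt\}$.
   Context: Write points of $\mathbb{R}^n$ as $x=(\bar x,x_n)$ with $\bar x\in\mathbb{R}^{n-1}$; bars always denote elements of $\mathbb{R}^{n-1}$. $\mathbb{R}^n_+:=\mathbb{R}^{n-1}\times(0,\infty)$ and $\mathbb{S}^{n-1}_+:=\{v=(\bar v,v_n)\in\mathbb{S}^{n-1}: v_n>0\}$. The source set is the hyperplane $\mathbb{R}^{n-1}\times\{0\}$, with source points $a=(\bar a,0)$. The $k$-weighted divergent beam transform is $R^kf(a,v):=\int_0^\infty f(a+rv)\,r^k\,dr$. Fourier transforms are understood in the sense of tempered distributions where needed. *)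

theory Defs
  imports "HOL-Analysis.Analysis"
begin

text \<open>Conventions. The space R^(n-1) is an arbitrary Euclidean space 'a (so n-1 = DIM('a) \<ge> 1,
 i.e. n \<ge> 2); points of R^n are pairs (xbar, x_n) :: 'a \<times> real.\<close>

text \<open>Iterated partial derivatives along a list of directions (applied from the end of the list).\<close>
inductive iter_partial :: "'a::euclidean_space set \<Rightarrow> ('a \<Rightarrow> 'b::real_normed_vector)
    \<Rightarrow> 'a list \<Rightarrow> ('a \<Rightarrow> 'b) \<Rightarrow> bool" where
  base: "iter_partial S f [] f"
| step: "iter_partial S f ds g \<Longrightarrow>
         (\<forall>x\<in>S. ((\<lambda>t. g (x + t *\<^sub>R d)) has_vector_derivative g' x) (at 0)) \<Longrightarrow>
         iter_partial S f (d # ds) g'"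

definition smooth_on :: "'a::euclidean_space set \<Rightarrow> ('a \<Rightarrow> 'b::real_normed_vector) \<Rightarrow> bool" where
  "smooth_on S f \<longleftrightarrow> open S \<and>
     (\<forall>ds. set ds \<subseteq> Basis \<longrightarrow> (\<exists>g. iter_partial S f ds g \<and> continuous_on S g))"

definition tsupp :: "('a::topological_space \<Rightarrow> 'b::zero) \<Rightarrow> 'a set" where
  "tsupp f = closure {x. f x \<noteq> 0}"

definition upper_half :: "('a::euclidean_space \<times> real) set" where
  "upper_half = {x. snd x > 0}"

definition upper_hemisphere :: "('a::euclidean_space \<times> real) set" where
  "upper_hemisphere = {v. norm v = 1 \<and> snd v > 0}"

text \<open>f \<in> C_c^\<infinity>(R^n_+) (f is extended by zero outside R^n_+).\<close>
definition Cc_inf_half :: "('a::euclidean_space \<times> real \<Rightarrow> real) \<Rightarrow> bool" where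
  "Cc_inf_half f \<longleftrightarrow> smooth_on upper_half f \<and> compact (tsupp f) \<and> tsupp f \<subseteq> upper_half"

definition beam_transform :: "nat \<Rightarrow> ('a::euclidean_space \<times> real \<Rightarrow> real)
    \<Rightarrow> 'a \<times> real \<Rightarrow> 'a \<times> real \<Rightarrow> real" where
  "beam_transform k f a v = (LINT r:{0..}|lborel. f (a + r *\<^sub>R v) * r ^ k)"

text \<open>The (gnomonic) chart p \<mapsto> v = (p,1)/|(p,1)|, inverse of v \<mapsto> vbar/v_n.\<close>
definition hemi_point :: "'a::euclidean_space \<Rightarrow> 'a \<times> real" where
  "hemi_point p = (1 / norm (p, 1::real)) *\<^sub>R (p, 1)"

text \<open>Smoothness on R^(n-1) \<times> S^(n-1)_+, expressed in the global chart above.\<close>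
definition smooth_on_hemi :: "('a::euclidean_space \<Rightarrow> 'a \<times> real \<Rightarrow> real) \<Rightarrow> bool" where
  "smooth_on_hemi u \<longleftrightarrow> smooth_on UNIV (\<lambda>(a, p). u a (hemi_point p))"

definition proj_data :: "nat \<Rightarrow> ('a::euclidean_space \<Rightarrow> 'a \<times> real \<Rightarrow> real) \<Rightarrow> 'a \<Rightarrow> 'a \<Rightarrow> real" where
  "proj_data k u a p = (snd (hemi_point p)) ^ (k + 1) * u a (hemi_point p)"

definition fourier_p :: "('a::euclidean_space \<Rightarrow> 'a \<Rightarrow> real) \<Rightarrow> 'a \<Rightarrow> 'a \<Rightarrow> complex" where
  "fourier_p w a xi = (\<integral>p. exp (- \<i> * complex_of_real (p \<bullet> xi)) * complex_of_real (w a p) \<partial>lborel)"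

definition fourier_full :: "(real \<times> 'a::euclidean_space \<Rightarrow> complex) \<Rightarrow> real \<times> 'a \<Rightarrow> complex" where
  "fourier_full h z = (\<integral>x. exp (- \<i> * complex_of_real (fst x * fst z + snd x \<bullet> snd z)) * h x \<partial>lborel)"

text \<open>h is the (tempered-distributional) inverse Fourier transform
 h = (2\<pi>)^(-n) \<integral>\<integral> e^(i(t s + p\<cdot>xi)) H(s,xi) ds dxi.  For h smooth with compact support
 this holds iff H coincides a.e. with the classical Fourier transform of h.\<close>
definition inv_fourier_of :: "(real \<times> 'a::euclidean_space \<Rightarrow> complex) \<Rightarrow> (real \<times> 'a \<Rightarrow> complex) \<Rightarrow> bool" where
  "inv_fourier_of h H \<longleftrightarrow> (AE z in lborel. H z = fourier_full h z)"

end

theory Submission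
  imports Defs
begin

definition Pn :: "'a::euclidean_space set \<Rightarrow> nat \<Rightarrow> ('a \<Rightarrow> 'b::real_normed_vector) \<Rightarrow> bool" where
  "Pn S n f \<longleftrightarrow> (\<forall>ds. length ds = n \<longrightarrow> set ds \<subseteq> Basis \<longrightarrow> (\<exists>g. iter_partial S f ds g \<and> continuous_on S g))"

lemma smooth_on_Pn: "smooth_on S f \<longleftrightarrow> open S \<and> (\<forall>n. Pn S n f)"
  by (auto simp: smooth_on_def Pn_def)

definition pd :: "'a::euclidean_space set \<Rightarrow> ('a \<Rightarrow> 'b::real_normed_vector) \<Rightarrow> 'a \<Rightarrow> ('a \<Rightarrow> 'b) \<Rightarrow> bool" where
  "pd S f d f1 \<longleftrightarrow> (\<forall>x\<in>S. ((\<lambda>t. f (x + t *\<^sub>R d)) has_vector_derivative f1 x) (at 0))"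

lemma ip_Nil: "iter_partial S f [] g \<longleftrightarrow> g = f"
  by (auto elim: iter_partial.cases intro: iter_partial.base)

lemma ip_Cons: "iter_partial S f (d#ds) g' \<longleftrightarrow> (\<exists>g. iter_partial S f ds g \<and> pd S g d g')"
  unfolding pd_def
  by (auto elim: iter_partial.cases intro: iter_partial.step)

lemma ip_snoc: "pd S f d f1 \<Longrightarrow> iter_partial S f1 ds g \<Longrightarrow> iter_partial S f (ds @ [d]) g"
proof (induction ds arbitrary: g)
  case Nil
  then show ?case by (auto simp: ip_Cons ip_Nil)
next
  case (Cons d' ds)
  then show ?case by (auto simp: ip_Cons)
qed

lemma ip_unsnoc: "iter_partial S f (ds @ [d]) g \<Longrightarrow> \<exists>f1. pd S f d f1 \<and> iter_partial S f1 ds g"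
proof (induction ds arbitrary: g)
  case Nil
  then show ?case by (auto simp: ip_Cons ip_Nil)
next
  case (Cons d' ds)
  then show ?case by (fastforce simp: ip_Cons)
qed

lemma Pn_0: "Pn S 0 f \<longleftrightarrow> continuous_on S f"
  by (auto simp: Pn_def ip_Nil)

lemma Pn_SucI:
  assumes "\<And>d. d \<in> Basis \<Longrightarrow> \<exists>f1. pd S f d f1 \<and> Pn S n f1"
  shows "Pn S (Suc n) f"
  unfolding Pn_def
proof (intro allI impI)
  fix ds :: "'a list" assume l: "length ds = Suc n" and s: "set ds \<subseteq> Basis"
  obtain ds' d where ds: "ds = ds' @ [d]"
    using l by (cases ds rule: rev_exhaust) auto
  have "d \<in> Basis" using s ds by auto
  then obtain f1 where f1: "pd S f d f1" "Pn S n f1" using assms by blast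
  then obtain g where "iter_partial S f1 ds' g" "continuous_on S g"
    using l s ds unfolding Pn_def by auto
  then show "\<exists>g. iter_partial S f ds g \<and> continuous_on S g"
    using ip_snoc[OF f1(1)] ds by blast
qed

lemma pd_unique: "pd S f d f1 \<Longrightarrow> pd S f d f2 \<Longrightarrow> x \<in> S \<Longrightarrow> f1 x = f2 x"
  unfolding pd_def using vector_derivative_unique_at by blast

lemma open_line_preimage:
  fixes x d :: "'a::real_normed_vector"
  shows "open S \<Longrightarrow> open {t::real. x + t *\<^sub>R d \<in> S}"
proof -
  assume "open S"
  have "continuous_on UNIV (\<lambda>t::real. x + t *\<^sub>R d)" by (intro continuous_intros)
  then show ?thesis using \<open>open S\<close> open_vimage[of S "\<lambda>t::real. x + t *\<^sub>R d"] by (simp add: vimage_def)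
qed

lemma pd_cong:
  assumes "open S" "pd S f d f1" "\<And>x. x \<in> S \<Longrightarrow> f x = g x" "\<And>x. x \<in> S \<Longrightarrow> f1 x = g1 x"
  shows "pd S g d g1"
  unfolding pd_def
proof
  fix x assume x: "x \<in> S"
  have "((\<lambda>t. f (x + t *\<^sub>R d)) has_vector_derivative f1 x) (at 0)"
    using assms(2) x unfolding pd_def by blast
  then have "((\<lambda>t. g (x + t *\<^sub>R d)) has_vector_derivative f1 x) (at 0)"
    by (rule has_vector_derivative_transform_within_open[OF _ open_line_preimage[OF assms(1), of x d]])
       (use x assms(3) in auto)
  then show "((\<lambda>t. g (x + t *\<^sub>R d)) has_vector_derivative g1 x) (at 0)"
    using assms(4) x by simp
qed

lemma ip_cong:
  assumes "iter_partial S f ds g" "open S" "\<And>x. x \<in> S \<Longrightarrow> f x = f' x"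
  shows "\<exists>g'. iter_partial S f' ds g' \<and> (\<forall>x\<in>S. g' x = g x)"
  using assms
proof (induction rule: iter_partial.induct)
  case (base S f)
  then show ?case by (auto intro: iter_partial.base)
next
  case (step S f ds g d g')
  then obtain g0 where g0: "iter_partial S f' ds g0" "\<forall>x\<in>S. g0 x = g x" by blast
  have "pd S g d g'" using step.hyps(2) unfolding pd_def by blast
  then have "pd S g0 d g'" using pd_cong[of S g d g' g0 g'] g0(2) step.prems by auto
  then show ?case using g0 by (auto simp: ip_Cons)
qed

lemma smooth_pd:
  assumes "smooth_on S f" "d \<in> Basis"
  shows "\<exists>f1. pd S f d f1 \<and> smooth_on S f1"
proof -
  have S: "open S" using assms by (simp add: smooth_on_def)
  have "set [d] \<subseteq> Basis" using assms by simp
  then obtain g where "iter_partial S f [d] g" using assms unfolding smooth_on_def by blast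
  then have g: "pd S f d g" by (auto simp: ip_Cons ip_Nil)
  have "smooth_on S g"
    unfolding smooth_on_def
  proof (intro conjI allI impI S)
    fix ds :: "'a list" assume "set ds \<subseteq> Basis"
    then obtain G where G: "iter_partial S f (ds @ [d]) G" "continuous_on S G"
      using assms unfolding smooth_on_def by (metis Un_subset_iff empty_subsetI insert_subset set_append set_simps)
    obtain f1 where f1: "pd S f d f1" "iter_partial S f1 ds G" using ip_unsnoc[OF G(1)] by blast
    have "\<forall>x\<in>S. f1 x = g x" using pd_unique[OF f1(1) g] by blast
    then obtain G' where "iter_partial S g ds G'" "\<forall>x\<in>S. G' x = G x"
      using ip_cong[OF f1(2) S] by metis
    then show "\<exists>g'. iter_partial S g ds g' \<and> continuous_on S g'"
      using G(2) continuous_on_cong by (metis (no_types, lifting))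
  qed
  then show ?thesis using g by blast
qed

lemma smooth_continuous: "smooth_on S f \<Longrightarrow> continuous_on S f"
  using Pn_0 smooth_on_Pn by blast

lemma smooth_onI:
  assumes "open S" "continuous_on S f" "\<And>d. d \<in> Basis \<Longrightarrow> \<exists>f1. pd S f d f1 \<and> smooth_on S f1"
  shows "smooth_on S f"
proof -
  have "Pn S n f" for n
  proof (cases n)
    case 0 then show ?thesis using assms by (simp add: Pn_0)
  next
    case (Suc m) then show ?thesis
      using assms(3) Pn_SucI smooth_on_Pn by metis
  qed
  then show ?thesis using assms smooth_on_Pn by blast
qed

lemma smooth_cong:
  assumes "smooth_on S f" "\<And>x. x \<in> S \<Longrightarrow> f x = g x"
  shows "smooth_on S g"
proof -
  have S: "open S" using assms by (simp add: smooth_on_def)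
  show ?thesis
    unfolding smooth_on_def
  proof (intro conjI allI impI S)
    fix ds :: "'a list" assume "set ds \<subseteq> Basis"
    then obtain G where G: "iter_partial S f ds G" "continuous_on S G"
      using assms unfolding smooth_on_def by blast
    then obtain G' where "iter_partial S g ds G'" "\<forall>x\<in>S. G' x = G x"
      using ip_cong[OF G(1) S] assms(2) by metis
    then show "\<exists>g'. iter_partial S g ds g' \<and> continuous_on S g'"
      using G(2) continuous_on_cong by (metis (no_types, lifting))
  qed
qed

lemma ip_mono: "iter_partial S f ds g \<Longrightarrow> T \<subseteq> S \<Longrightarrow> iter_partial T f ds g"
proof (induction rule: iter_partial.induct)
  case (base S f)
  show ?case by (rule iter_partial.base)
next
  case (step S f ds g d g')
  then show ?case using iter_partial.step[of T f ds g d g'] by blast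
qed

lemma smooth_mono: "smooth_on S f \<Longrightarrow> T \<subseteq> S \<Longrightarrow> open T \<Longrightarrow> smooth_on T f"
  unfolding smooth_on_def using ip_mono continuous_on_subset by metis

lemma pd_zero: "pd S (\<lambda>x. 0) d (\<lambda>x. 0)"
  by (simp add: pd_def)

lemma ip_zero: "iter_partial S (\<lambda>x. 0) ds (\<lambda>x. 0)"
  by (induction ds) (auto simp: ip_Cons ip_Nil pd_zero)

lemma pd_add: "pd S f d f1 \<Longrightarrow> pd S g d g1 \<Longrightarrow> pd S (\<lambda>x. f x + g x) d (\<lambda>x. f1 x + g1 x)"
  unfolding pd_def by (auto intro: has_vector_derivative_add)

lemma ip_add: "iter_partial S f ds F \<Longrightarrow> iter_partial S g ds G \<Longrightarrow>
   iter_partial S (\<lambda>x. f x + g x) ds (\<lambda>x. F x + G x)"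
proof (induction ds arbitrary: F G)
  case Nil
  then show ?case by (simp add: ip_Nil)
next
  case (Cons d ds)
  then show ?case by (metis ip_Cons pd_add)
qed

lemma Pn_add: "Pn S n f \<Longrightarrow> Pn S n g \<Longrightarrow> Pn S n (\<lambda>x. f x + g x)"
  unfolding Pn_def
proof (intro allI impI)
  fix ds :: "'a list"
  assume A: "\<forall>ds. length ds = n \<longrightarrow> set ds \<subseteq> Basis \<longrightarrow> (\<exists>g. iter_partial S f ds g \<and> continuous_on S g)"
    and B: "\<forall>ds. length ds = n \<longrightarrow> set ds \<subseteq> Basis \<longrightarrow> (\<exists>ga. iter_partial S g ds ga \<and> continuous_on S ga)"
    and l: "length ds = n" "set ds \<subseteq> Basis"
  obtain F G where "iter_partial S f ds F" "continuous_on S F" "iter_partial S g ds G" "continuous_on S G"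
    using A B l by blast
  then show "\<exists>ga. iter_partial S (\<lambda>x. f x + g x) ds ga \<and> continuous_on S ga"
    using ip_add continuous_on_add by blast
qed

lemma Pn_zero: "Pn S n (\<lambda>x. 0)"
  unfolding Pn_def using ip_zero[of S _] continuous_on_const by blast

lemma Pn_sum: "finite I \<Longrightarrow> (\<And>i. i \<in> I \<Longrightarrow> Pn S n (f i)) \<Longrightarrow> Pn S n (\<lambda>x. \<Sum>i\<in>I. f i x)"
proof (induction I rule: finite_induct)
  case empty
  then show ?case using Pn_zero by simp
next
  case (insert i I)
  have a: "Pn S n (f i)" using insert.prems by simp
  have b: "Pn S n (\<lambda>x. \<Sum>i\<in>I. f i x)" using insert.prems by (intro insert.IH) simp
  have "Pn S n (\<lambda>x. f i x + (\<Sum>i\<in>I. f i x))" using Pn_add[OF a b] .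
  then show ?case using insert.hyps by simp
qed

lemma smooth_coinduct:
  fixes P :: "('a::euclidean_space \<Rightarrow> 'b::real_normed_vector) \<Rightarrow> bool"
  assumes "open S" "P f0"
    and cont: "\<And>f. P f \<Longrightarrow> continuous_on S f"
    and der: "\<And>f d. P f \<Longrightarrow> d \<in> Basis \<Longrightarrow> \<exists>g0 (I :: 'i set) F. finite I \<and> P g0 \<and> (\<forall>i\<in>I. P (F i))
                  \<and> pd S f d (\<lambda>x. g0 x + (\<Sum>i\<in>I. F i x))"
  shows "smooth_on S f0"
proof -
  have "\<forall>f. P f \<longrightarrow> Pn S n f" for n
  proof (induction n)
    case 0 then show ?case using cont by (simp add: Pn_0)
  next
    case (Suc n)
    show ?case
    proof (intro allI impI Pn_SucI)
      fix f and d :: 'a assume "P f" "d \<in> Basis"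
      then obtain g0 and I :: "'i set" and F where *: "finite I" "P g0" "\<forall>i\<in>I. P (F i)"
        "pd S f d (\<lambda>x. g0 x + (\<Sum>i\<in>I. F i x))" using der by metis
      have a: "Pn S n g0" using *(2) Suc.IH by simp
      have "\<And>i. i \<in> I \<Longrightarrow> Pn S n (F i)" using *(3) Suc.IH by simp
      then have b: "Pn S n (\<lambda>x. \<Sum>i\<in>I. F i x)" by (rule Pn_sum[OF *(1)])
      have "Pn S n (\<lambda>x. g0 x + (\<Sum>i\<in>I. F i x))" using Pn_add[OF a b] .
      then show "\<exists>f1. pd S f d f1 \<and> Pn S n f1" using *(4) by blast
    qed
  qed
  then show ?thesis using assms(1,2) by (simp add: smooth_on_Pn)
qed

lemma smooth_add:
  assumes "smooth_on S f" "smooth_on S g"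
  shows "smooth_on S (\<lambda>x. f x + g x)"
  using assms unfolding smooth_on_Pn using Pn_add by blast

lemma smooth_sum:
  assumes "finite I" "\<And>i. i \<in> I \<Longrightarrow> smooth_on S (f i)" "open S"
  shows "smooth_on S (\<lambda>x. \<Sum>i\<in>I. f i x)"
  using assms unfolding smooth_on_Pn using Pn_sum[OF assms(1)] by blast

lemma pd_linear: "bounded_linear L \<Longrightarrow> pd S f d f1 \<Longrightarrow> pd S (\<lambda>x. L (f x)) d (\<lambda>x. L (f1 x))"
  unfolding pd_def using bounded_linear.has_vector_derivative by blast

lemma ip_linear: "bounded_linear L \<Longrightarrow> iter_partial S f ds g \<Longrightarrow> iter_partial S (\<lambda>x. L (f x)) ds (\<lambda>x. L (g x))"
proof (induction ds arbitrary: g)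
  case Nil then show ?case by (simp add: ip_Nil)
next
  case (Cons d ds) then show ?case by (metis ip_Cons pd_linear)
qed

lemma smooth_linear:
  fixes f :: "'a::euclidean_space \<Rightarrow> 'b::real_normed_vector" and L :: "'b \<Rightarrow> 'c::real_normed_vector"
  assumes "bounded_linear L" "smooth_on S f"
  shows "smooth_on S (\<lambda>x. L (f x))"
  unfolding smooth_on_def
proof (intro conjI allI impI)
  show "open S" using assms(2) by (simp add: smooth_on_def)
  fix ds :: "'a list" assume "set ds \<subseteq> Basis"
  then obtain G where G: "iter_partial S f ds G" "continuous_on S G"
    using assms unfolding smooth_on_def by blast
  have "continuous_on S (\<lambda>x. L (G x))"
    using G(2) assms(1) by (simp add: bounded_linear.continuous_on)
  then show "\<exists>g. iter_partial S (\<lambda>x. L (f x)) ds g \<and> continuous_on S g"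
    using ip_linear[OF assms(1) G(1)] by blast
qed

lemma smooth_const: "open S \<Longrightarrow> smooth_on S (\<lambda>x. c)"
proof -
  assume S: "open S"
  have "smooth_on S (\<lambda>x::'a. 0::'b)"
  proof (rule smooth_coinduct[where P="\<lambda>f. f = (\<lambda>x. 0)"])
    fix f :: "'a \<Rightarrow> 'b" and d :: 'a assume "f = (\<lambda>x. 0)"
    then show "\<exists>g0 (I::nat set) F. finite I \<and> g0 = (\<lambda>x. 0) \<and> (\<forall>i\<in>I. F i = (\<lambda>x. 0)) \<and>
       pd S f d (\<lambda>x. g0 x + (\<Sum>i\<in>I. F i x))"
      by (intro exI[of _ "\<lambda>x. 0"] exI[of _ "{}"]) (simp add: pd_zero)
  qed (use S in auto)
  then have z: "smooth_on S (\<lambda>x::'a. 0::'b)" .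
  show ?thesis
  proof (rule smooth_onI[OF S])
    show "continuous_on S (\<lambda>x. c)" by simp
    fix d :: 'a
    have "pd S (\<lambda>x. c) d (\<lambda>x. 0)" by (simp add: pd_def)
    then show "\<exists>f1. pd S (\<lambda>x. c) d f1 \<and> smooth_on S f1" using z by blast
  qed
qed

lemma smooth_blinear:
  assumes "open S" "bounded_linear L"
  shows "smooth_on S L"
proof (rule smooth_onI[OF assms(1)])
  show "continuous_on S L" using assms(2) linear_continuous_on by blast
  fix d :: 'a
  have "pd S L d (\<lambda>x. L d)"
    unfolding pd_def
  proof
    fix x
    have "((\<lambda>t. L x + t *\<^sub>R L d) has_vector_derivative L d) (at 0)"
      by (auto intro!: derivative_eq_intros)
    then show "((\<lambda>t. L (x + t *\<^sub>R d)) has_vector_derivative L d) (at 0)"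
      using assms(2) by (simp add: linear_add linear_scale bounded_linear.linear)
  qed
  then show "\<exists>f1. pd S L d f1 \<and> smooth_on S f1" using smooth_const[OF assms(1)] by blast
qed


lemma pd_shift:
  assumes "pd S f d f1" "y + r *\<^sub>R d \<in> S"
  shows "((\<lambda>t. f (y + t *\<^sub>R d)) has_vector_derivative f1 (y + r *\<^sub>R d)) (at r)"
proof -
  have A: "((\<lambda>t. f ((y + r *\<^sub>R d) + t *\<^sub>R d)) has_vector_derivative f1 (y + r *\<^sub>R d)) (at 0)"
    using assms unfolding pd_def by blast
  have B: "((\<lambda>t. t - r) has_vector_derivative 1) (at r)"
    by (rule has_vector_derivative_eq_rhs[OF has_vector_derivative_diff[OF has_vector_derivative_id has_vector_derivative_const]]) simp
  have "((\<lambda>t. f ((y + r *\<^sub>R d) + t *\<^sub>R d)) \<circ> (\<lambda>t. t - r) has_vector_derivative 1 *\<^sub>R f1 (y + r *\<^sub>R d)) (at r)"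
    by (rule vector_diff_chain_at[OF B]) (use A in simp)
  moreover have "((\<lambda>t. f ((y + r *\<^sub>R d) + t *\<^sub>R d)) \<circ> (\<lambda>t. t - r)) = (\<lambda>t. f (y + t *\<^sub>R d))"
    by (rule ext) (simp add: algebra_simps)
  ultimately show ?thesis by simp
qed

lemma frechet_partials:
  fixes f :: "'a::euclidean_space \<Rightarrow> 'b::real_normed_vector"
  assumes S: "open S" and pdD: "\<And>b. b \<in> Basis \<Longrightarrow> pd S f b (D b)"
    and cD: "\<And>b. b \<in> Basis \<Longrightarrow> continuous_on S (D b)" and x: "x \<in> S"
  shows "(f has_derivative (\<lambda>v. \<Sum>b\<in>Basis. (v \<bullet> b) *\<^sub>R D b x)) (at x)"
  unfolding has_derivative_at_alt
proof (intro conjI allI impI)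
  show "bounded_linear (\<lambda>v. \<Sum>b\<in>Basis. (v \<bullet> b) *\<^sub>R D b x)"
    by (rule bounded_linear_sum, rule bounded_linear_compose[OF bounded_linear_scaleR_left bounded_linear_inner_left])
  fix e :: real assume e: "e > 0"
  define e' where "e' = e / (3 * real DIM('a))"
  have e': "e' > 0" using e by (simp add: e'_def)
  define \<psi> where "\<psi> z = (\<Sum>b\<in>Basis. norm (D b z - D b x))" for z
  have "continuous_on S \<psi>" unfolding \<psi>_def
    by (intro continuous_on_sum continuous_on_norm continuous_on_diff cD continuous_on_const)
  then obtain d1 where d1: "d1 > 0" "\<And>z. z \<in> S \<Longrightarrow> dist z x < d1 \<Longrightarrow> dist (\<psi> z) (\<psi> x) < e'"
    using x e' unfolding continuous_on_iff by metis
  obtain d2 where d2: "d2 > 0" "ball x d2 \<subseteq> S" using S x openE by blast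
  define \<delta> where "\<delta> = min d1 d2"
  have \<delta>: "\<delta> > 0" using d1 d2 by (simp add: \<delta>_def)
  have ballS: "z \<in> S" if "norm (z - x) < \<delta>" for z
    using that d2 by (auto simp: \<delta>_def dist_norm norm_minus_commute)
  have Dclose: "norm (D b z - D b x) \<le> e'" if "norm (z - x) < \<delta>" "b \<in> Basis" for z b
  proof -
    have "\<psi> x = 0" by (simp add: \<psi>_def)
    have "dist (\<psi> z) (\<psi> x) < e'" using d1(2)[OF ballS[OF that(1)]] that(1)
      by (auto simp: \<delta>_def dist_norm)
    then have "\<psi> z < e'" using \<open>\<psi> x = 0\<close> by (simp add: dist_norm)
    moreover have "norm (D b z - D b x) \<le> \<psi> z"
      unfolding \<psi>_def by (rule member_le_sum) (use that in auto)
    ultimately show ?thesis by simp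
  qed
  have step1: "norm (f (y + c *\<^sub>R b) - f y - c *\<^sub>R D b x) \<le> 3 * e' * \<bar>c\<bar>"
    if b: "b \<in> Basis" and yc: "norm (y - x) + \<bar>c\<bar> < \<delta>" for y b c
  proof -
    have nb: "norm b = 1" using b by simp
    have inseg: "norm (y + r *\<^sub>R b - x) < \<delta>" if "r \<in> closed_segment 0 c" for r
    proof -
      have "\<bar>r\<bar> \<le> \<bar>c\<bar>" using that by (auto simp: closed_segment_eq_real_ivl split: if_splits)
      have e: "y + r *\<^sub>R b - x = (y - x) + r *\<^sub>R b" by simp
      have "norm (y + r *\<^sub>R b - x) \<le> norm (y - x) + norm (r *\<^sub>R b)"
        unfolding e by (rule norm_triangle_ineq)
      also have "\<dots> \<le> norm (y - x) + \<bar>c\<bar>" using \<open>\<bar>r\<bar> \<le> \<bar>c\<bar>\<close> nb by simp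
      finally show ?thesis using yc by simp
    qed
    have der: "((\<lambda>r. f (y + r *\<^sub>R b)) has_vector_derivative D b (y + r *\<^sub>R b)) (at r within closed_segment 0 c)"
      if "r \<in> closed_segment 0 c" for r
      using pd_shift[OF pdD[OF b] ballS[OF inseg[OF that]]] has_vector_derivative_at_within by blast
    have bnd: "norm (D b (y + r *\<^sub>R b) - D b (y + 0 *\<^sub>R b)) \<le> 2 * e'" if "r \<in> closed_segment 0 c" for r
    proof -
      have y0: "norm (y + 0 *\<^sub>R b - x) < \<delta>" using inseg[of 0] by simp
      have "norm (D b (y + r *\<^sub>R b) - D b (y + 0 *\<^sub>R b)) \<le> norm (D b (y + r *\<^sub>R b) - D b x) + norm (D b (y + 0 *\<^sub>R b) - D b x)"
        using norm_triangle_ineq4[of "D b (y + r *\<^sub>R b) - D b x" "D b (y + 0 *\<^sub>R b) - D b x"] by simp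
      also have "\<dots> \<le> e' + e'" using Dclose[OF inseg[OF that] b] Dclose[OF y0 b] by simp
      finally show ?thesis by simp
    qed
    have "norm (f (y + c *\<^sub>R b) - f (y + 0 *\<^sub>R b) - (c - 0) *\<^sub>R D b (y + 0 *\<^sub>R b)) \<le> norm (c - 0) * (2 * e')"
      by (rule vector_differentiable_bound_linearization[where S="closed_segment 0 c" and f="\<lambda>r. f (y + r *\<^sub>R b)"
            and f'="\<lambda>r. D b (y + r *\<^sub>R b)" and B="2 * e'"])
         (use der bnd in auto)
    then have A: "norm (f (y + c *\<^sub>R b) - f y - c *\<^sub>R D b y) \<le> \<bar>c\<bar> * (2 * e')" by simp
    have y0: "norm (y - x) < \<delta>" using yc by linarith
    have B: "norm (c *\<^sub>R D b y - c *\<^sub>R D b x) \<le> \<bar>c\<bar> * e'"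
      using Dclose[OF y0 b] by (simp add: scaleR_diff_right[symmetric] mult_left_mono)
    have "norm (f (y + c *\<^sub>R b) - f y - c *\<^sub>R D b x) \<le> norm (f (y + c *\<^sub>R b) - f y - c *\<^sub>R D b y) + norm (c *\<^sub>R D b y - c *\<^sub>R D b x)"
      by (rule order_trans[OF _ norm_triangle_ineq]) (simp add: algebra_simps)
    also have "\<dots> \<le> \<bar>c\<bar> * (2 * e') + \<bar>c\<bar> * e'" using A B by (rule add_mono)
    finally show ?thesis by (simp add: algebra_simps)
  qed
  have claim: "norm (f (y + (\<Sum>b\<in>set bs. (h \<bullet> b) *\<^sub>R b)) - f y - (\<Sum>b\<in>set bs. (h \<bullet> b) *\<^sub>R D b x))
      \<le> 3 * e' * (\<Sum>b\<in>set bs. \<bar>h \<bullet> b\<bar>)"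
    if "distinct bs" "set bs \<subseteq> Basis" "norm (y - x) + (\<Sum>b\<in>set bs. \<bar>h \<bullet> b\<bar>) < \<delta>" for bs y h
    using that
  proof (induction bs arbitrary: y)
    case Nil
    then show ?case by simp
  next
    case (Cons b bs)
    have b: "b \<in> Basis" "b \<notin> set bs" using Cons.prems by auto
    define c where "c = h \<bullet> b"
    define y' where "y' = y + c *\<^sub>R b"
    have s1: "(\<Sum>b\<in>set (b#bs). (h \<bullet> b) *\<^sub>R b) = c *\<^sub>R b + (\<Sum>b\<in>set bs. (h \<bullet> b) *\<^sub>R b)"
      using b by (simp add: c_def)
    have s2: "(\<Sum>b\<in>set (b#bs). (h \<bullet> b) *\<^sub>R D b x) = c *\<^sub>R D b x + (\<Sum>b\<in>set bs. (h \<bullet> b) *\<^sub>R D b x)"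
      using b by (simp add: c_def)
    have s3: "(\<Sum>b\<in>set (b#bs). \<bar>h \<bullet> b\<bar>) = \<bar>c\<bar> + (\<Sum>b\<in>set bs. \<bar>h \<bullet> b\<bar>)"
      using b by (simp add: c_def)
    have ey: "y' - x = (y - x) + c *\<^sub>R b" by (simp add: y'_def)
    have ny': "norm (y' - x) \<le> norm (y - x) + \<bar>c\<bar>"
      using norm_triangle_ineq[of "y - x" "c *\<^sub>R b"] b(1) unfolding ey by simp
    have nn: "0 \<le> (\<Sum>b\<in>set bs. \<bar>h \<bullet> b\<bar>)" by (simp add: sum_nonneg)
    have d1: "distinct bs" "set bs \<subseteq> Basis" using Cons.prems(1,2) by auto
    have d2: "norm (y' - x) + (\<Sum>b\<in>set bs. \<bar>h \<bullet> b\<bar>) < \<delta>" using ny' Cons.prems(3) s3 by linarith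
    have IH: "norm (f (y' + (\<Sum>b\<in>set bs. (h \<bullet> b) *\<^sub>R b)) - f y' - (\<Sum>b\<in>set bs. (h \<bullet> b) *\<^sub>R D b x))
      \<le> 3 * e' * (\<Sum>b\<in>set bs. \<bar>h \<bullet> b\<bar>)"
      by (rule Cons.IH[OF d1 d2])
    have "norm (y - x) + \<bar>c\<bar> < \<delta>" using Cons.prems(3) s3 nn by linarith
    then have one: "norm (f y' - f y - c *\<^sub>R D b x) \<le> 3 * e' * \<bar>c\<bar>"
      unfolding y'_def using b(1) by (rule step1[rotated])
    have "f (y + (\<Sum>b\<in>set (b#bs). (h \<bullet> b) *\<^sub>R b)) - f y - (\<Sum>b\<in>set (b#bs). (h \<bullet> b) *\<^sub>R D b x)
        = (f (y' + (\<Sum>b\<in>set bs. (h \<bullet> b) *\<^sub>R b)) - f y' - (\<Sum>b\<in>set bs. (h \<bullet> b) *\<^sub>R D b x))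
          + (f y' - f y - c *\<^sub>R D b x)"
      unfolding s1 s2 y'_def by (simp add: algebra_simps)
    then have "norm (f (y + (\<Sum>b\<in>set (b#bs). (h \<bullet> b) *\<^sub>R b)) - f y - (\<Sum>b\<in>set (b#bs). (h \<bullet> b) *\<^sub>R D b x)) \<le>
       norm (f (y' + (\<Sum>b\<in>set bs. (h \<bullet> b) *\<^sub>R b)) - f y' - (\<Sum>b\<in>set bs. (h \<bullet> b) *\<^sub>R D b x))
          + norm (f y' - f y - c *\<^sub>R D b x)" by (simp only: norm_triangle_ineq)
    then have "norm (f (y + (\<Sum>b\<in>set (b#bs). (h \<bullet> b) *\<^sub>R b)) - f y - (\<Sum>b\<in>set (b#bs). (h \<bullet> b) *\<^sub>R D b x))
       \<le> 3 * e' * (\<Sum>b\<in>set bs. \<bar>h \<bullet> b\<bar>) + 3 * e' * \<bar>c\<bar>"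
      using IH one by linarith
    then show ?case using s3 by (simp add: algebra_simps)
  qed
  obtain bs where bs: "set bs = (Basis :: 'a set)" "distinct bs" using finite_distinct_list[OF finite_Basis] by blast
  have DIMpos: "real DIM('a) > 0" by simp
  show "\<exists>d>0. \<forall>y. norm (y - x) < d \<longrightarrow>
     norm (f y - f x - (\<Sum>b\<in>Basis. ((y - x) \<bullet> b) *\<^sub>R D b x)) \<le> e * norm (y - x)"
  proof (intro exI[of _ "\<delta> / real DIM('a)"] conjI allI impI)
    show "\<delta> / real DIM('a) > 0" using \<delta> by simp
    fix y assume y: "norm (y - x) < \<delta> / real DIM('a)"
    define h where "h = y - x"
    have sumle: "(\<Sum>b\<in>Basis. \<bar>h \<bullet> b\<bar>) \<le> real DIM('a) * norm h"
    proof -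
      have "(\<Sum>b\<in>(Basis::'a set). \<bar>h \<bullet> b\<bar>) \<le> (\<Sum>b\<in>(Basis::'a set). norm h)"
        by (intro sum_mono) (simp add: Basis_le_norm)
      then show ?thesis by simp
    qed
    have "norm h < \<delta> / real DIM('a)" using y by (simp add: h_def)
    then have "real DIM('a) * norm h < \<delta>" using DIMpos by (simp add: less_divide_eq mult.commute)
    then have pre: "norm (x - x) + (\<Sum>b\<in>set bs. \<bar>h \<bullet> b\<bar>) < \<delta>" using sumle bs(1) by simp
    have sb: "set bs \<subseteq> Basis" using bs(1) by simp
    have c0: "norm (f (x + (\<Sum>b\<in>set bs. (h \<bullet> b) *\<^sub>R b)) - f x - (\<Sum>b\<in>set bs. (h \<bullet> b) *\<^sub>R D b x))
      \<le> 3 * e' * (\<Sum>b\<in>set bs. \<bar>h \<bullet> b\<bar>)" by (rule claim[OF bs(2) sb pre])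
    have xy: "x + h = y" by (simp add: h_def)
    have c1: "norm (f y - f x - (\<Sum>b\<in>Basis. ((y - x) \<bullet> b) *\<^sub>R D b x)) \<le> 3 * e' * (\<Sum>b\<in>Basis. \<bar>h \<bullet> b\<bar>)"
      using c0 unfolding bs(1) euclidean_representation xy by (simp add: h_def)
    have c2: "3 * e' * (\<Sum>b\<in>Basis. \<bar>h \<bullet> b\<bar>) \<le> 3 * e' * (real DIM('a) * norm h)"
      using sumle e' by (intro mult_left_mono) auto
    have c3: "3 * e' * (real DIM('a) * norm h) = e * norm h"
      using DIMpos unfolding e'_def by simp
    show "norm (f y - f x - (\<Sum>b\<in>Basis. ((y - x) \<bullet> b) *\<^sub>R D b x)) \<le> e * norm (y - x)"
      using c1 c2 c3 unfolding h_def by linarith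
  qed
qed

lemma smooth_scaleR:
  fixes c :: "'a::euclidean_space \<Rightarrow> real" and g :: "'a \<Rightarrow> 'b::real_normed_vector"
  assumes "smooth_on S c" "smooth_on S g"
  shows "smooth_on S (\<lambda>x. c x *\<^sub>R g x)"
proof -
  define Q where "Q f \<longleftrightarrow> (\<exists>c g. smooth_on S c \<and> smooth_on S g \<and> f = (\<lambda>x. c x *\<^sub>R g x))"
    for f :: "'a \<Rightarrow> 'b"
  show ?thesis
  proof (rule smooth_coinduct[where P=Q])
    show "open S" using assms(1) by (simp add: smooth_on_def)
    show "Q (\<lambda>x. c x *\<^sub>R g x)" unfolding Q_def using assms by blast
  next
    fix f assume "Q f"
    then obtain c g where cg: "smooth_on S c" "smooth_on S g" "f = (\<lambda>x. c x *\<^sub>R g x)"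
      unfolding Q_def by blast
    show "continuous_on S f" unfolding cg(3)
      by (rule continuous_on_scaleR[OF smooth_continuous[OF cg(1)] smooth_continuous[OF cg(2)]])
  next
    fix f and d :: 'a assume "Q f" and d: "d \<in> Basis"
    then obtain c g where cg: "smooth_on S c" "smooth_on S g" "f = (\<lambda>x. c x *\<^sub>R g x)"
      unfolding Q_def by blast
    obtain c1 where c1: "pd S c d c1" "smooth_on S c1" using smooth_pd[OF cg(1) d] by blast
    obtain g1 where g1: "pd S g d g1" "smooth_on S g1" using smooth_pd[OF cg(2) d] by blast
    have pdf: "pd S f d (\<lambda>x. c1 x *\<^sub>R g x + (\<Sum>i\<in>{()}. c x *\<^sub>R g1 x))"
      unfolding pd_def cg(3)
    proof
      fix x assume x: "x \<in> S"
      have hc: "((\<lambda>t. c (x + t *\<^sub>R d)) has_real_derivative c1 x) (at 0)"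
        using c1(1) x unfolding pd_def has_real_derivative_iff_has_vector_derivative by blast
      have hg: "((\<lambda>t. g (x + t *\<^sub>R d)) has_vector_derivative g1 x) (at 0)"
        using g1(1) x unfolding pd_def by blast
      have "((\<lambda>t. c (x + t *\<^sub>R d) *\<^sub>R g (x + t *\<^sub>R d)) has_vector_derivative
          c (x + 0 *\<^sub>R d) *\<^sub>R g1 x + c1 x *\<^sub>R g (x + 0 *\<^sub>R d)) (at 0)"
        by (rule has_vector_derivative_scaleR[OF hc hg])
      then show "((\<lambda>t. c (x + t *\<^sub>R d) *\<^sub>R g (x + t *\<^sub>R d)) has_vector_derivative
          c1 x *\<^sub>R g x + (\<Sum>i\<in>{()}. c x *\<^sub>R g1 x)) (at 0)"
        by (simp add: add.commute)
    qed
    have q1: "Q (\<lambda>x. c1 x *\<^sub>R g x)" unfolding Q_def using c1(2) cg(2) by blast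
    have q2: "\<forall>i\<in>{()}. Q ((\<lambda>_ x. c x *\<^sub>R g1 x) i)" unfolding Q_def using cg(1) g1(2) by blast
    show "\<exists>g0 (I::unit set) F. finite I \<and> Q g0 \<and> (\<forall>i\<in>I. Q (F i)) \<and> pd S f d (\<lambda>x. g0 x + (\<Sum>i\<in>I. F i x))"
      using q1 q2 pdf by (intro exI[of _ "\<lambda>x. c1 x *\<^sub>R g x"] exI[of _ "{()}"] exI[of _ "\<lambda>_ x. c x *\<^sub>R g1 x"]) simp
  qed
qed

lemma smooth_mult:
  fixes c g :: "'a::euclidean_space \<Rightarrow> real"
  assumes "smooth_on S c" "smooth_on S g"
  shows "smooth_on S (\<lambda>x. c x * g x)"
  using smooth_scaleR[OF assms] by simp

lemma pd_comp:
  fixes G :: "'c::euclidean_space \<Rightarrow> 'b::real_normed_vector" and \<Phi> :: "'a::euclidean_space \<Rightarrow> 'c"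
  assumes S: "open S" and pG: "\<And>b. b \<in> Basis \<Longrightarrow> pd S G b (DG b)"
    and cG: "\<And>b. b \<in> Basis \<Longrightarrow> continuous_on S (DG b)"
    and pP: "pd T \<Phi> d DP" and img: "\<And>x. x \<in> T \<Longrightarrow> \<Phi> x \<in> S"
  shows "pd T (\<lambda>x. G (\<Phi> x)) d (\<lambda>x. \<Sum>b\<in>Basis. (DP x \<bullet> b) *\<^sub>R DG b (\<Phi> x))"
  unfolding pd_def
proof
  fix x assume x: "x \<in> T"
  have h1: "((\<lambda>t. \<Phi> (x + t *\<^sub>R d)) has_derivative (\<lambda>s. s *\<^sub>R DP x)) (at 0)"
    using pP x unfolding pd_def has_vector_derivative_def by blast
  have h2: "(G has_derivative (\<lambda>v. \<Sum>b\<in>Basis. (v \<bullet> b) *\<^sub>R DG b (\<Phi> x))) (at (\<Phi> (x + 0 *\<^sub>R d)))"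
    using frechet_partials[OF S pG cG img[OF x]] by simp
  have "((\<lambda>t. G (\<Phi> (x + t *\<^sub>R d))) has_derivative (\<lambda>s. \<Sum>b\<in>Basis. ((s *\<^sub>R DP x) \<bullet> b) *\<^sub>R DG b (\<Phi> x))) (at 0)"
    using has_derivative_compose[OF h1 h2] by simp
  moreover have "(\<lambda>s. \<Sum>b\<in>Basis. ((s *\<^sub>R DP x) \<bullet> b) *\<^sub>R DG b (\<Phi> x))
      = (\<lambda>s. s *\<^sub>R (\<Sum>b\<in>Basis. (DP x \<bullet> b) *\<^sub>R DG b (\<Phi> x)))"
    by (rule ext) (simp add: scaleR_sum_right)
  ultimately show "((\<lambda>t. G (\<Phi> (x + t *\<^sub>R d))) has_vector_derivative (\<Sum>b\<in>Basis. (DP x \<bullet> b) *\<^sub>R DG b (\<Phi> x))) (at 0)"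
    unfolding has_vector_derivative_def by simp
qed

lemma smooth_comp:
  fixes G :: "'c::euclidean_space \<Rightarrow> 'b::real_normed_vector" and \<Phi> :: "'a::euclidean_space \<Rightarrow> 'c"
  assumes G: "smooth_on S G" and P: "smooth_on T \<Phi>" and img: "\<And>x. x \<in> T \<Longrightarrow> \<Phi> x \<in> S"
  shows "smooth_on T (\<lambda>x. G (\<Phi> x))"
proof -
  have S: "open S" and T: "open T" using G P by (simp_all add: smooth_on_def)
  define Q where "Q f \<longleftrightarrow> (\<exists>c G'. smooth_on T c \<and> smooth_on S G' \<and> f = (\<lambda>x. c x *\<^sub>R G' (\<Phi> x)))"
    for f :: "'a \<Rightarrow> 'b"
  have cP: "continuous_on T \<Phi>" using smooth_continuous[OF P] .
  have "smooth_on T (\<lambda>x. (\<lambda>_. 1::real) x *\<^sub>R G (\<Phi> x))"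
  proof (rule smooth_coinduct[where P=Q])
    show "open T" by (rule T)
    show "Q (\<lambda>x. (\<lambda>_. 1::real) x *\<^sub>R G (\<Phi> x))" unfolding Q_def using smooth_const[OF T] G by blast
  next
    fix f assume "Q f"
    then obtain c G' where cg: "smooth_on T c" "smooth_on S G'" "f = (\<lambda>x. c x *\<^sub>R G' (\<Phi> x))"
      unfolding Q_def by blast
    have "continuous_on T (\<lambda>x. G' (\<Phi> x))"
      by (rule continuous_on_compose2[OF smooth_continuous[OF cg(2)] cP]) (use img in blast)
    then show "continuous_on T f" unfolding cg(3)
      by (rule continuous_on_scaleR[OF smooth_continuous[OF cg(1)]])
  next
    fix f and d :: 'a assume "Q f" and d: "d \<in> Basis"
    then obtain c G' where cg: "smooth_on T c" "smooth_on S G'" "f = (\<lambda>x. c x *\<^sub>R G' (\<Phi> x))"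
      unfolding Q_def by blast
    obtain c1 where c1: "pd T c d c1" "smooth_on T c1" using smooth_pd[OF cg(1) d] by blast
    obtain DP where DP: "pd T \<Phi> d DP" "smooth_on T DP" using smooth_pd[OF P d] by blast
    have "\<forall>b\<in>Basis. \<exists>g. pd S G' b g \<and> smooth_on S g" using smooth_pd[OF cg(2)] by blast
    then obtain DG where DG: "\<And>b. b \<in> Basis \<Longrightarrow> pd S G' b (DG b) \<and> smooth_on S (DG b)"
      by metis
    have comp: "pd T (\<lambda>x. G' (\<Phi> x)) d (\<lambda>x. \<Sum>b\<in>Basis. (DP x \<bullet> b) *\<^sub>R DG b (\<Phi> x))"
      by (rule pd_comp[OF S]) (use DG DP img smooth_continuous in auto)
    have pdf: "pd T f d (\<lambda>x. c1 x *\<^sub>R G' (\<Phi> x) + (\<Sum>b\<in>Basis. (c x * (DP x \<bullet> b)) *\<^sub>R DG b (\<Phi> x)))"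
      unfolding pd_def cg(3)
    proof
      fix x assume x: "x \<in> T"
      have hc: "((\<lambda>t. c (x + t *\<^sub>R d)) has_real_derivative c1 x) (at 0)"
        using c1(1) x unfolding pd_def has_real_derivative_iff_has_vector_derivative by blast
      have hg: "((\<lambda>t. G' (\<Phi> (x + t *\<^sub>R d))) has_vector_derivative (\<Sum>b\<in>Basis. (DP x \<bullet> b) *\<^sub>R DG b (\<Phi> x))) (at 0)"
        using comp x unfolding pd_def by blast
      have A: "((\<lambda>t. c (x + t *\<^sub>R d) *\<^sub>R G' (\<Phi> (x + t *\<^sub>R d))) has_vector_derivative
          c (x + 0 *\<^sub>R d) *\<^sub>R (\<Sum>b\<in>Basis. (DP x \<bullet> b) *\<^sub>R DG b (\<Phi> x)) + c1 x *\<^sub>R G' (\<Phi> (x + 0 *\<^sub>R d))) (at 0)"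
        by (rule has_vector_derivative_scaleR[OF hc hg])
      have E: "c (x + 0 *\<^sub>R d) *\<^sub>R (\<Sum>b\<in>Basis. (DP x \<bullet> b) *\<^sub>R DG b (\<Phi> x)) + c1 x *\<^sub>R G' (\<Phi> (x + 0 *\<^sub>R d))
          = c1 x *\<^sub>R G' (\<Phi> x) + (\<Sum>b\<in>Basis. (c x * (DP x \<bullet> b)) *\<^sub>R DG b (\<Phi> x))"
        by (simp add: scaleR_sum_right add.commute)
      show "((\<lambda>t. c (x + t *\<^sub>R d) *\<^sub>R G' (\<Phi> (x + t *\<^sub>R d))) has_vector_derivative
          c1 x *\<^sub>R G' (\<Phi> x) + (\<Sum>b\<in>Basis. (c x * (DP x \<bullet> b)) *\<^sub>R DG b (\<Phi> x))) (at 0)"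
        by (rule has_vector_derivative_eq_rhs[OF A E])
    qed
    have q1: "Q (\<lambda>x. c1 x *\<^sub>R G' (\<Phi> x))" unfolding Q_def using c1(2) cg(2) by blast
    have q2: "\<forall>b\<in>Basis. Q ((\<lambda>b x. (c x * (DP x \<bullet> b)) *\<^sub>R DG b (\<Phi> x)) b)"
    proof
      fix b :: 'c assume b: "b \<in> Basis"
      have "smooth_on T (\<lambda>x. DP x \<bullet> b)"
        by (rule smooth_linear[OF bounded_linear_inner_left DP(2)])
      then have "smooth_on T (\<lambda>x. c x * (DP x \<bullet> b))" by (rule smooth_mult[OF cg(1)])
      then show "Q ((\<lambda>b x. (c x * (DP x \<bullet> b)) *\<^sub>R DG b (\<Phi> x)) b)"
        unfolding Q_def using DG[OF b] by blast
    qed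
    show "\<exists>g0 (I::'c set) F. finite I \<and> Q g0 \<and> (\<forall>i\<in>I. Q (F i)) \<and> pd T f d (\<lambda>x. g0 x + (\<Sum>i\<in>I. F i x))"
      using q1 q2 pdf
      by (intro exI[of _ "\<lambda>x. c1 x *\<^sub>R G' (\<Phi> x)"] exI[of _ "Basis::'c set"]
          exI[of _ "\<lambda>b x. (c x * (DP x \<bullet> b)) *\<^sub>R DG b (\<Phi> x)"]) simp
  qed
  then show ?thesis by simp
qed

lemma smooth_zero_ext:
  fixes F :: "'a::euclidean_space \<Rightarrow> 'b::real_normed_vector"
  assumes F: "smooth_on S F" and C: "closed C" "C \<subseteq> S" and van: "\<And>x. x \<in> S \<Longrightarrow> x \<notin> C \<Longrightarrow> F x = 0"
  shows "smooth_on UNIV (\<lambda>x. if x \<in> S then F x else 0)"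
proof -
  have S: "open S" using F by (simp add: smooth_on_def)
  have oC: "open (- C)" using C(1) by (simp add: open_Compl)
  define Q where "Q f \<longleftrightarrow> (\<exists>F. smooth_on S F \<and> (\<forall>x\<in>S. x \<notin> C \<longrightarrow> F x = 0) \<and> f = (\<lambda>x. if x \<in> S then F x else 0))"
    for f :: "'a \<Rightarrow> 'b"
  show ?thesis
  proof (rule smooth_coinduct[where P=Q])
    show "open (UNIV::'a set)" by simp
    show "Q (\<lambda>x. if x \<in> S then F x else 0)" unfolding Q_def using F van by blast
  next
    fix f assume "Q f"
    then obtain F where FF: "smooth_on S F" "\<forall>x\<in>S. x \<notin> C \<longrightarrow> F x = 0" "f = (\<lambda>x. if x \<in> S then F x else 0)"
      unfolding Q_def by blast
    have c1: "continuous_on S f"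
      using smooth_continuous[OF FF(1)] by (rule continuous_on_cong[THEN iffD1, rotated 2]) (simp_all add: FF(3))
    have c2: "continuous_on (- C) f"
      by (rule continuous_on_cong[THEN iffD1, OF refl _ continuous_on_const[of _ 0]]) (use FF in auto)
    have "continuous_on (S \<union> - C) f" by (rule continuous_on_open_Un[OF S oC c1 c2])
    moreover have "S \<union> - C = UNIV" using C(2) by blast
    ultimately show "continuous_on UNIV f" by simp
  next
    fix f and d :: 'a assume "Q f" and d: "d \<in> Basis"
    then obtain F where FF: "smooth_on S F" "\<forall>x\<in>S. x \<notin> C \<longrightarrow> F x = 0" "f = (\<lambda>x. if x \<in> S then F x else 0)"
      unfolding Q_def by blast
    obtain F1 where F1: "pd S F d F1" "smooth_on S F1" using smooth_pd[OF FF(1) d] by blast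
    have F1van: "F1 x = 0" if x: "x \<in> S" "x \<notin> C" for x
    proof -
      have o: "open {t::real. x + t *\<^sub>R d \<in> S \<inter> - C}" by (rule open_line_preimage) (use S oC in auto)
      have "((\<lambda>t. 0::'b) has_vector_derivative 0) (at 0)" by simp
      then have "((\<lambda>t. F (x + t *\<^sub>R d)) has_vector_derivative 0) (at 0)"
        by (rule has_vector_derivative_transform_within_open[OF _ o]) (use x FF(2) in auto)
      moreover have "((\<lambda>t. F (x + t *\<^sub>R d)) has_vector_derivative F1 x) (at 0)"
        using F1(1) x unfolding pd_def by blast
      ultimately show ?thesis using vector_derivative_unique_at by metis
    qed
    have pdf: "pd UNIV f d (\<lambda>x. (if x \<in> S then F1 x else 0) + (\<Sum>i\<in>{}. (\<lambda>_ x. 0::'b) i x))"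
      unfolding pd_def
    proof
      fix x :: 'a
      show "((\<lambda>t. f (x + t *\<^sub>R d)) has_vector_derivative (if x \<in> S then F1 x else 0) + (\<Sum>i\<in>{}. (\<lambda>_ x. 0::'b) i x)) (at 0)"
      proof (cases "x \<in> S")
        case True
        have o: "open {t::real. x + t *\<^sub>R d \<in> S}" by (rule open_line_preimage[OF S])
        have "((\<lambda>t. F (x + t *\<^sub>R d)) has_vector_derivative F1 x) (at 0)"
          using F1(1) True unfolding pd_def by blast
        then have "((\<lambda>t. f (x + t *\<^sub>R d)) has_vector_derivative F1 x) (at 0)"
          by (rule has_vector_derivative_transform_within_open[OF _ o]) (use True FF(3) in auto)
        then show ?thesis using True by simp
      next
        case False
        then have xC: "x \<notin> C" using C(2) by blast
        have o: "open {t::real. x + t *\<^sub>R d \<in> - C}" by (rule open_line_preimage[OF oC])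
        have "((\<lambda>t. 0::'b) has_vector_derivative 0) (at 0)" by simp
        then have "((\<lambda>t. f (x + t *\<^sub>R d)) has_vector_derivative 0) (at 0)"
          by (rule has_vector_derivative_transform_within_open[OF _ o]) (use xC FF(2,3) in auto)
        then show ?thesis using False by simp
      qed
    qed
    have q1: "Q (\<lambda>x. if x \<in> S then F1 x else 0)" unfolding Q_def using F1(2) F1van by blast
    show "\<exists>g0 (I::unit set) G. finite I \<and> Q g0 \<and> (\<forall>i\<in>I. Q (G i)) \<and> pd UNIV f d (\<lambda>x. g0 x + (\<Sum>i\<in>I. G i x))"
      using q1 pdf by (intro exI[of _ "\<lambda>x. if x \<in> S then F1 x else 0"] exI[of _ "{}::unit set"] exI[of _ "\<lambda>_ x. 0::'b"]) simp
  qed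
qed

lemma deriv_inv_pow:
  assumes "x \<noteq> (0::real)"
  shows "((\<lambda>t. c * inverse (x + t) ^ m) has_real_derivative (- (c * m) * inverse x ^ Suc m)) (at 0)"
proof -
  have h1: "((\<lambda>t. x + t) has_real_derivative 1) (at 0)"
    using DERIV_add[OF DERIV_const[of x] DERIV_ident] by simp
  have h2: "((\<lambda>t. inverse (x + t)) has_real_derivative - (1 * inverse ((x + 0) ^ Suc (Suc 0)))) (at 0)"
    using DERIV_inverse_fun[OF h1] assms by simp
  have h3: "((\<lambda>t. inverse (x + t) ^ m) has_real_derivative
      of_nat m * (- (1 * inverse ((x + 0) ^ Suc (Suc 0))) * inverse (x + 0) ^ (m - Suc 0))) (at 0)"
    by (rule DERIV_power[OF h2])
  have h4: "((\<lambda>t. c * inverse (x + t) ^ m) has_real_derivative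
      c * (of_nat m * (- (1 * inverse ((x + 0) ^ Suc (Suc 0))) * inverse (x + 0) ^ (m - Suc 0)))) (at 0)"
    by (rule DERIV_cmult[OF h3])
  have "c * (of_nat m * (- (1 * inverse ((x + 0) ^ Suc (Suc 0))) * inverse (x + 0) ^ (m - Suc 0)))
      = - (c * m) * inverse x ^ Suc m"
  proof (cases m)
    case 0 then show ?thesis by simp
  next
    case (Suc k)
    have "inverse (x ^ Suc (Suc 0)) * inverse x ^ k = inverse x ^ Suc (Suc k)"
      by (simp add: power_inverse[symmetric] field_simps)
    then show ?thesis using Suc by (simp add: algebra_simps)
  qed
  then show ?thesis using DERIV_cong[OF h4] by blast
qed

lemma smooth_inv_pow: "smooth_on {x::real. x \<noteq> 0} (\<lambda>x. inverse x ^ m)"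
proof -
  define S where "S = {x::real. x \<noteq> 0}"
  have S: "open S" unfolding S_def by (simp add: open_Collect_neq continuous_on_const continuous_on_id)
  define Q where "Q f \<longleftrightarrow> (\<exists>c m. f = (\<lambda>x::real. c * inverse x ^ m))" for f :: "real \<Rightarrow> real"
  have "smooth_on S (\<lambda>x. 1 * inverse x ^ m)"
  proof (rule smooth_coinduct[where P=Q])
    show "open S" by (rule S)
    show "Q (\<lambda>x. 1 * inverse x ^ m)" unfolding Q_def by blast
  next
    fix f assume "Q f"
    then obtain c m where f: "f = (\<lambda>x::real. c * inverse x ^ m)" unfolding Q_def by blast
    show "continuous_on S f" unfolding f S_def
      by (intro continuous_on_mult continuous_on_const continuous_on_power continuous_on_inverse continuous_on_id) auto
  next
    fix f and d :: real assume "Q f" and d: "d \<in> Basis"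
    then obtain c m where f: "f = (\<lambda>x::real. c * inverse x ^ m)" unfolding Q_def by blast
    have d1: "d = 1" using d by simp
    have pdf: "pd S f d (\<lambda>x. (- (c * m) * inverse x ^ Suc m) + (\<Sum>i\<in>{}. (\<lambda>_ x. 0::real) i x))"
      unfolding pd_def
    proof
      fix x assume "x \<in> S"
      then have "x \<noteq> 0" by (simp add: S_def)
      from deriv_inv_pow[OF this, of c m]
      show "((\<lambda>t. f (x + t *\<^sub>R d)) has_vector_derivative (- (c * m) * inverse x ^ Suc m) + (\<Sum>i\<in>{}. (\<lambda>_ x. 0::real) i x)) (at 0)"
        unfolding f d1 has_real_derivative_iff_has_vector_derivative by simp
    qed
    have q1: "Q (\<lambda>x. - (c * m) * inverse x ^ Suc m)" unfolding Q_def by blast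
    show "\<exists>g0 (I::unit set) G. finite I \<and> Q g0 \<and> (\<forall>i\<in>I. Q (G i)) \<and> pd S f d (\<lambda>x. g0 x + (\<Sum>i\<in>I. G i x))"
      using q1 pdf by (intro exI[of _ "\<lambda>x. - (c * m) * inverse x ^ Suc m"] exI[of _ "{}::unit set"] exI[of _ "\<lambda>_ x. 0::real"]) simp
  qed
  then show ?thesis by (simp add: S_def)
qed

lemma smooth_fst_inv_pow:
  assumes "open T" "\<And>z. z \<in> T \<Longrightarrow> fst z \<noteq> (0::real)"
  shows "smooth_on T (\<lambda>z::real \<times> 'b::euclidean_space. inverse (fst z) ^ m)"
  by (rule smooth_comp[OF smooth_inv_pow smooth_blinear[OF assms(1) bounded_linear_fst]]) (use assms(2) in auto)

lemma smooth_snd_inv_pow: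
  assumes "open T" "\<And>z. z \<in> T \<Longrightarrow> snd z \<noteq> (0::real)"
  shows "smooth_on T (\<lambda>z::'b::euclidean_space \<times> real. inverse (snd z) ^ m)"
  by (rule smooth_comp[OF smooth_inv_pow smooth_blinear[OF assms(1) bounded_linear_snd]]) (use assms(2) in auto)

lemma open_fst_neg: "open {z::real \<times> 'b::euclidean_space. fst z < 0}"
  by (rule open_Collect_less) (auto intro: continuous_intros)

lemma open_upper_half: "open (upper_half :: ('b::euclidean_space \<times> real) set)"
  unfolding upper_half_def by (rule open_Collect_less) (auto intro: continuous_intros)

lemma fwd_h_smooth:
  fixes f :: "'a::euclidean_space \<times> real \<Rightarrow> real"
  assumes f: "smooth_on upper_half f" and c1: "0 < c2" and van: "\<And>y s. s > c2 \<Longrightarrow> f (y, s) = 0"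
  shows "smooth_on UNIV (\<lambda>z::real \<times> 'a. if fst z < 0 then (- inverse (fst z)) ^ (k + 2) *
            f ((- inverse (fst z)) *\<^sub>R snd z, - inverse (fst z)) else 0)"
proof -
  define T where "T = {z::real \<times> 'a. fst z < 0}"
  have T: "open T" unfolding T_def by (rule open_fst_neg)
  have nz: "\<And>z. z \<in> T \<Longrightarrow> fst z \<noteq> 0" by (auto simp: T_def)
  have s1: "smooth_on T (\<lambda>z. - (inverse (fst z) ^ 1))"
    by (rule smooth_linear[OF bounded_linear_minus[OF bounded_linear_ident] smooth_fst_inv_pow[OF T nz]])
  have s: "smooth_on T (\<lambda>z. - inverse (fst z))" using s1 by simp
  have c1': "smooth_on T (\<lambda>z. (- 1) ^ (k + 2) * inverse (fst z) ^ (k + 2))"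
    by (rule smooth_mult[OF smooth_const[OF T] smooth_fst_inv_pow[OF T nz]])
  have c: "smooth_on T (\<lambda>z. (- inverse (fst z)) ^ (k + 2))"
    by (rule smooth_cong[OF c1']) (simp add: power_minus[of "inverse _"])
  have A: "smooth_on T (\<lambda>z::real \<times> 'a. (snd z, 0::real) + (0, 1))"
    by (rule smooth_add[OF smooth_blinear[OF T] smooth_const[OF T]])
       (intro bounded_linear_Pair bounded_linear_snd bounded_linear_zero)
  have Phi: "smooth_on T (\<lambda>z. (- inverse (fst z)) *\<^sub>R ((snd z, 0::real) + (0, 1)))"
    by (rule smooth_scaleR[OF s A])
  have img: "(- inverse (fst z)) *\<^sub>R ((snd z, 0::real) + (0, 1)) \<in> upper_half" if "z \<in> T" for z
    using that by (simp add: upper_half_def T_def)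
  have fPhi: "smooth_on T (\<lambda>z. f ((- inverse (fst z)) *\<^sub>R ((snd z, 0::real) + (0, 1))))"
    by (rule smooth_comp[OF f Phi img])
  have H0: "smooth_on T (\<lambda>z. (- inverse (fst z)) ^ (k + 2) *\<^sub>R f ((- inverse (fst z)) *\<^sub>R ((snd z, 0::real) + (0, 1))))"
    by (rule smooth_scaleR[OF c fPhi])
  define C where "C = {z::real \<times> 'a. fst z \<le> - inverse c2}"
  have C: "closed C" unfolding C_def by (rule closed_Collect_le) (auto intro: continuous_intros)
  have CT: "C \<subseteq> T" using c1 by (auto simp: C_def T_def) (smt (verit) inverse_positive_iff_positive)
  have vanC: "(- inverse (fst z)) ^ (k + 2) *\<^sub>R f ((- inverse (fst z)) *\<^sub>R ((snd z, 0::real) + (0, 1))) = 0"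
    if "z \<in> T" "z \<notin> C" for z
  proof -
    have t0: "fst z < 0" and t1: "fst z > - inverse c2" using that by (auto simp: T_def C_def)
    have "- inverse (fst z) > c2" using t0 t1 c1
      by (smt (verit) inverse_less_iff_less_neg inverse_minus_eq inverse_inverse_eq)
    then have "f ((- inverse (fst z)) *\<^sub>R snd z, - inverse (fst z)) = 0" by (rule van)
    then show ?thesis by simp
  qed
  have "smooth_on UNIV (\<lambda>z. if z \<in> T then (- inverse (fst z)) ^ (k + 2) *\<^sub>R
      f ((- inverse (fst z)) *\<^sub>R ((snd z, 0::real) + (0, 1))) else 0)"
    by (rule smooth_zero_ext[OF H0 C CT vanC])
  then show ?thesis by (rule smooth_cong) (simp add: T_def)
qed

lemma conv_f_smooth:
  fixes h :: "real \<times> 'a::euclidean_space \<Rightarrow> complex"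
  assumes h: "smooth_on UNIV h"
  shows "smooth_on upper_half (\<lambda>z::'a \<times> real. if snd z > 0 then
      Re (complex_of_real (inverse (snd z) ^ (k + 2)) * h (- inverse (snd z), inverse (snd z) *\<^sub>R fst z)) else 0)"
proof -
  define T where "T = (upper_half :: ('a \<times> real) set)"
  have T: "open T" unfolding T_def by (rule open_upper_half)
  have nz: "\<And>z. z \<in> T \<Longrightarrow> snd z \<noteq> 0" by (auto simp: T_def upper_half_def)
  have i: "smooth_on T (\<lambda>z. inverse (snd z) ^ 1)" by (rule smooth_snd_inv_pow[OF T nz])
  have B: "smooth_on T (\<lambda>z::'a \<times> real. (0::real, fst z) + (- 1, 0))"
    by (rule smooth_add[OF smooth_blinear[OF T] smooth_const[OF T]])
       (intro bounded_linear_Pair bounded_linear_fst bounded_linear_zero)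
  have Psi: "smooth_on T (\<lambda>z. inverse (snd z) ^ 1 *\<^sub>R ((0::real, fst z) + (- 1, 0)))"
    by (rule smooth_scaleR[OF i B])
  have hPsi: "smooth_on T (\<lambda>z. h (inverse (snd z) ^ 1 *\<^sub>R ((0::real, fst z) + (- 1, 0))))"
    by (rule smooth_comp[OF h Psi]) simp
  have c: "smooth_on T (\<lambda>z. inverse (snd z) ^ (k + 2))" by (rule smooth_snd_inv_pow[OF T nz])
  have prod: "smooth_on T (\<lambda>z. inverse (snd z) ^ (k + 2) *\<^sub>R h (inverse (snd z) ^ 1 *\<^sub>R ((0::real, fst z) + (- 1, 0))))"
    by (rule smooth_scaleR[OF c hPsi])
  have re: "smooth_on T (\<lambda>z. Re (inverse (snd z) ^ (k + 2) *\<^sub>R h (inverse (snd z) ^ 1 *\<^sub>R ((0::real, fst z) + (- 1, 0)))))"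
    by (rule smooth_linear[OF bounded_linear_Re prod])
  show ?thesis unfolding T_def[symmetric]
    by (rule smooth_cong[OF re]) (auto simp: T_def upper_half_def scaleR_conv_of_real)
qed

lemma integrable_cont_cpt:
  fixes F :: "'e::euclidean_space \<Rightarrow> 'b::{banach, second_countable_topology}"
  assumes "continuous_on UNIV F" "compact K" "\<And>x. x \<notin> K \<Longrightarrow> F x = 0"
  shows "integrable lborel F"
proof -
  have "integrable lborel (\<lambda>x. indicat_real K x *\<^sub>R F x)"
    by (rule borel_integrable_compact[OF assms(2) continuous_on_subset[OF assms(1)]]) simp
  moreover have "(\<lambda>x. indicat_real K x *\<^sub>R F x) = F"
    by (rule ext) (use assms(3) in \<open>auto simp: indicator_def\<close>)
  ultimately show ?thesis by simp
qed

lemma emeasure_ball_pos: "r > 0 \<Longrightarrow> emeasure lborel (ball (c::'e::euclidean_space) r) > 0"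
  by (simp add: emeasure_ball unit_ball_vol_pos)

lemma ae_zero_cont:
  fixes g :: "'e::euclidean_space \<Rightarrow> 'b::real_normed_vector"
  assumes g: "continuous_on UNIV g" and ae: "AE x in lborel. g x = 0"
  shows "g x = 0"
proof (rule ccontr)
  assume nz: "g x \<noteq> 0"
  have op: "open {x. g x \<noteq> 0}"
    using open_Collect_neq[OF g continuous_on_const] by simp
  then obtain r where r: "r > 0" "ball x r \<subseteq> {x. g x \<noteq> 0}" using nz openE by blast
  have meas: "{x. g x \<noteq> 0} \<in> sets lborel" using op by simp
  have "emeasure lborel {x. g x \<noteq> 0} = 0"
    using AE_iff_measurable[OF meas, of "\<lambda>x. g x = 0"] ae by simp
  then have "emeasure lborel (ball x r) = 0"
    using emeasure_mono[OF r(2) meas] by simp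
  then show False using emeasure_ball_pos[OF r(1), of x] by simp
qed

lemma integral_translate:
  fixes g :: "'e::euclidean_space \<Rightarrow> 'b::{banach, second_countable_topology}"
  assumes "g \<in> borel_measurable borel"
  shows "(\<integral>q. g (q + c) \<partial>lborel) = (\<integral>q. g q \<partial>lborel)"
proof -
  have "(\<integral>q. g q \<partial>lborel) = (\<integral>q. g q \<partial>(distr lborel borel ((+) c)))"
    by (simp add: lborel_distr_plus)
  also have "\<dots> = (\<integral>q. g (c + q) \<partial>lborel)"
    by (rule integral_distr) (use assms in auto)
  finally show ?thesis by (simp add: add.commute)
qed

lemma param_cont:
  fixes F :: "'x::euclidean_space \<Rightarrow> 'e::euclidean_space \<Rightarrow> 'b::{banach, second_countable_topology}"
  assumes cF: "continuous_on UNIV (\<lambda>z. F (fst z) (snd z))" and K: "compact K"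
    and van: "\<And>x y. y \<notin> K \<Longrightarrow> F x y = 0"
  shows "continuous_on UNIV (\<lambda>x. \<integral>y. F x y \<partial>lborel)"
  unfolding continuous_on_iff
proof (intro ballI allI impI)
  fix x0 :: 'x and e :: real assume "x0 \<in> UNIV" and e: "e > 0"
  have int: "integrable lborel (F x)" for x
  proof (rule integrable_cont_cpt[OF _ K])
    have "continuous_on UNIV ((\<lambda>z. F (fst z) (snd z)) \<circ> (\<lambda>y. (x, y)))"
      by (rule continuous_on_compose[OF _ continuous_on_subset[OF cF]]) (auto intro!: continuous_intros)
    then show "continuous_on UNIV (F x)" by (simp add: o_def)
  qed (use van in auto)
  define m where "m = measure lborel K"
  have m: "m \<ge> 0" by (simp add: m_def)
  define e' where "e' = e / (m + 1)"
  have e': "e' > 0" using e m by (simp add: e'_def)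
  have cpt: "compact (cball x0 1 \<times> K)" using K by (intro compact_Times) auto
  have "uniformly_continuous_on (cball x0 1 \<times> K) (\<lambda>z. F (fst z) (snd z))"
    by (rule compact_uniformly_continuous[OF continuous_on_subset[OF cF] cpt]) simp
  then obtain d where d: "d > 0" "\<And>z z'. z \<in> cball x0 1 \<times> K \<Longrightarrow> z' \<in> cball x0 1 \<times> K \<Longrightarrow>
      dist z' z < d \<Longrightarrow> dist (F (fst z') (snd z')) (F (fst z) (snd z)) < e'"
    unfolding uniformly_continuous_on_def using e' by metis
  show "\<exists>d>0. \<forall>x'\<in>UNIV. dist x' x0 < d \<longrightarrow> dist (\<integral>y. F x' y \<partial>lborel) (\<integral>y. F x0 y \<partial>lborel) < e"
  proof (intro exI[of _ "min d 1"] conjI ballI impI)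
    show "min d 1 > 0" using d by simp
    fix x assume "x \<in> UNIV" and dx: "dist x x0 < min d 1"
    have pt: "norm (F x y - F x0 y) \<le> e' * indicator K y" for y
    proof (cases "y \<in> K")
      case True
      have "x \<in> cball x0 1" "x0 \<in> cball x0 1" using dx by (auto simp: dist_commute)
      moreover have "dist (x, y) (x0, y) < d" using dx by (simp add: dist_Pair_Pair)
      ultimately have "dist (F x y) (F x0 y) < e'"
        using d(2)[of "(x0, y)" "(x, y)"] True by simp
      then show ?thesis using True by (simp add: dist_norm)
    next
      case False then show ?thesis using van by simp
    qed
    have intK: "integrable lborel (\<lambda>y. e' * indicat_real K y)"
      using emeasure_compact_finite[OF K] by (intro integrable_mult_right integrable_real_indicator) (auto simp: K compact_imp_closed borel_closed)
    have "norm ((\<integral>y. F x y \<partial>lborel) - (\<integral>y. F x0 y \<partial>lborel)) = norm (\<integral>y. F x y - F x0 y \<partial>lborel)"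
      using int by (simp add: integral_diff)
    also have "\<dots> \<le> (\<integral>y. e' * indicator K y \<partial>lborel)"
      by (rule Bochner_Integration.integral_norm_bound_integral[OF Bochner_Integration.integrable_diff[OF int int] intK]) (use pt in auto)
    also have "\<dots> = e' * m" by (simp add: m_def)
    also have "\<dots> < e" using e m by (simp add: e'_def field_simps)
    finally show "dist (\<integral>y. F x y \<partial>lborel) (\<integral>y. F x0 y \<partial>lborel) < e" by (simp add: dist_norm)
  qed
qed

lemma cont_comp_UNIV: "continuous_on UNIV \<phi> \<Longrightarrow> continuous_on S g \<Longrightarrow> continuous_on S (\<lambda>x. \<phi> (g x))"
  by (rule continuous_on_compose2[of UNIV \<phi> S g]) auto

lemma subst_inv:
  fixes g :: "real \<Rightarrow> complex"
  assumes cont: "continuous_on UNIV g" and c: "0 < c1" "c1 \<le> c2"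
    and van: "\<And>s. s \<notin> {c1..c2} \<Longrightarrow> g s = 0"
  shows "(\<integral>s. g s \<partial>lborel) = (\<integral>t. (if t < 0 then (inverse t)^2 *\<^sub>R g (- inverse t) else 0) \<partial>lborel)"
proof -
  define G where "G t = (if t < 0 then (inverse t)^2 *\<^sub>R g (- inverse t) else 0)" for t :: real
  have c2: "0 < c2" using c by simp
  have Gz: "G t = 0" if "t > - inverse c2" for t
  proof (cases "t < 0")
    case True
    then have "- inverse t > c2" using that c2
      by (smt (verit) inverse_less_iff_less_neg inverse_minus_eq inverse_inverse_eq)
    then show ?thesis using van True by (simp add: G_def)
  qed (simp add: G_def)
  have Gz2: "G t = 0" if "t < - inverse c1" for t
  proof -
    have t0: "t < 0" using that c by (smt (verit) inverse_positive_iff_positive)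
    have "- inverse t < c1" using that c t0
      by (smt (verit) inverse_less_iff_less_neg inverse_minus_eq inverse_inverse_eq)
    moreover have "- inverse t > 0" using t0 by simp
    ultimately show ?thesis using van t0 by (simp add: G_def)
  qed
  have cG: "continuous_on UNIV G"
  proof -
    have a: "continuous_on {t. t < 0} G"
    proof -
      have "continuous_on {t::real. t < 0} (\<lambda>t. (inverse t)^2 *\<^sub>R g (- inverse t))"
        by (intro continuous_on_scaleR continuous_on_power continuous_on_inverse continuous_on_id
            cont_comp_UNIV[OF cont] continuous_on_minus) auto
      then show ?thesis by (rule continuous_on_cong[THEN iffD1, rotated 2]) (auto simp: G_def)
    qed
    have b: "continuous_on {t. t > - inverse c2} G"
      by (rule continuous_on_cong[THEN iffD1, OF refl _ continuous_on_const[of _ 0]]) (use Gz in auto)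
    have "continuous_on ({t. t < 0} \<union> {t. t > - inverse c2}) G"
      by (rule continuous_on_open_Un[OF _ _ a b]) (auto simp: open_Collect_less continuous_on_const continuous_on_id)
    moreover have "{t::real. t < 0} \<union> {t. t > - inverse c2} = UNIV"
    proof -
      have n: "- inverse c2 < 0" using c2 by simp
      have "x \<in> {t. t < 0} \<union> {t. t > - inverse c2}" for x :: real
      proof (cases "x < 0")
        case False then have "x > - inverse c2" using n by linarith
        then show ?thesis by simp
      qed simp
      then show ?thesis by blast
    qed
    ultimately show ?thesis by simp
  qed
  have intg: "integrable lborel g"
    by (rule integrable_cont_cpt[OF cont compact_Icc[of c1 c2]]) (use van in auto)
  have intG: "integrable lborel G"
    by (rule integrable_cont_cpt[OF cG compact_Icc[of "- inverse c1" "- inverse c2"]])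
       (use Gz Gz2 in \<open>auto simp: not_le\<close>)
  have der: "((\<lambda>s. - inverse s) has_real_derivative (inverse s)^2) (at s within {c1..c2})"
    if "s \<in> {c1..c2}" for s
  proof -
    have s0: "s \<noteq> 0" using that c by auto
    have "((\<lambda>s. - inverse s) has_real_derivative - (- (inverse s ^ Suc (Suc 0)))) (at s within {c1..c2})"
      by (rule DERIV_minus[OF DERIV_inverse[OF s0]])
    then show ?thesis by (simp add: power2_eq_square)
  qed
  have sub: "((\<lambda>s. (inverse s)^2 *\<^sub>R G (- inverse s)) has_integral integral {- inverse c1..- inverse c2} G) {c1..c2}"
  proof (rule has_integral_substitution[where c="- inverse c1" and d="- inverse c2"])
    show "c1 \<le> c2" by (rule c(2))
    show "- inverse c1 \<le> - inverse c2" using c by (simp add: le_imp_inverse_le)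
    show "(\<lambda>s. - inverse s) ` {c1..c2} \<subseteq> {- inverse c1..- inverse c2}"
      using c by (auto intro!: le_imp_inverse_le)
    show "continuous_on {- inverse c1..- inverse c2} G" by (rule continuous_on_subset[OF cG]) simp
  qed (rule der)
  have eq: "(inverse s)^2 *\<^sub>R G (- inverse s) = g s" if "s \<in> {c1..c2}" for s
  proof -
    have s0: "s > 0" using that c by auto
    then have "inverse s * inverse s * (s * s) = 1" by (simp add: field_simps)
    then show ?thesis using s0 by (simp add: G_def power2_eq_square)
  qed
  have "(g has_integral integral {- inverse c1..- inverse c2} G) {c1..c2}"
    using sub has_integral_cong[of "{c1..c2}" "\<lambda>s. (inverse s)^2 *\<^sub>R G (- inverse s)" g] eq by simp
  then have "integral {c1..c2} g = integral {- inverse c1..- inverse c2} G" by (rule integral_unique)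
  moreover have "integral UNIV g = integral {c1..c2} g"
  proof -
    have "(\<lambda>x. if x \<in> {c1..c2} then g x else 0) = g" by (rule ext) (use van in auto)
    then show ?thesis using integral_restrict_UNIV[of "{c1..c2}" g] by simp
  qed
  moreover have "integral UNIV G = integral {- inverse c1..- inverse c2} G"
  proof -
    have "(\<lambda>x. if x \<in> {- inverse c1..- inverse c2} then G x else 0) = G" by (rule ext) (use Gz Gz2 in \<open>auto simp: not_le\<close>)
    then show ?thesis using integral_restrict_UNIV[of "{- inverse c1..- inverse c2}" G] by simp
  qed
  ultimately have "integral UNIV g = integral UNIV G" by simp
  then show ?thesis using integral_lborel[OF intg] integral_lborel[OF intG] by (simp add: G_def)
qed


definition supp_cond :: "('a::euclidean_space \<times> real \<Rightarrow> 'b::zero) \<Rightarrow> real \<Rightarrow> real \<Rightarrow> real \<Rightarrow> bool" where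
  "supp_cond \<phi> c1 c2 D \<longleftrightarrow> 0 < c1 \<and> c1 \<le> c2 \<and> 0 \<le> D \<and>
     (\<forall>y s. \<phi> (y, s) \<noteq> 0 \<longrightarrow> c1 \<le> s \<and> s \<le> c2 \<and> norm y \<le> D)"

definition wfun :: "('a::euclidean_space \<times> real \<Rightarrow> complex) \<Rightarrow> nat \<Rightarrow> 'a \<Rightarrow> 'a \<Rightarrow> complex" where
  "wfun \<phi> k a p = (\<integral>s. \<phi> (a + s *\<^sub>R p, s) * complex_of_real s ^ k \<partial>lborel)"

definition hfun :: "('a::euclidean_space \<times> real \<Rightarrow> complex) \<Rightarrow> nat \<Rightarrow> real \<times> 'a \<Rightarrow> complex" where
  "hfun \<phi> k z = (if fst z < 0 then complex_of_real ((- inverse (fst z)) ^ (k + 2)) *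
       \<phi> ((- inverse (fst z)) *\<^sub>R snd z, - inverse (fst z)) else 0)"

lemma supp_condD:
  assumes "supp_cond \<phi> c1 c2 D" "\<phi> (y, s) \<noteq> 0"
  shows "c1 \<le> s" "s \<le> c2" "norm y \<le> D"
  using assms by (auto simp: supp_cond_def)

lemma supp_cond_pos: "supp_cond \<phi> c1 c2 D \<Longrightarrow> 0 < c1 \<and> c1 \<le> c2 \<and> 0 \<le> D"
  by (simp add: supp_cond_def)

lemma supp_cond_zero: "supp_cond \<phi> c1 c2 D \<Longrightarrow> s < c1 \<Longrightarrow> \<phi> (y, s) = 0"
  using supp_condD(1) by fastforce

lemma integrable_pair_lborel:
  fixes F :: "'x::euclidean_space \<times> 'y::euclidean_space \<Rightarrow> 'b::{banach, second_countable_topology}"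
  shows "integrable lborel F \<Longrightarrow> integrable (lborel \<Otimes>\<^sub>M lborel) F"
  by (simp add: lborel_prod)

lemma hfun_cont:
  fixes \<phi> :: "'a::euclidean_space \<times> real \<Rightarrow> complex"
  assumes c\<phi>: "continuous_on UNIV \<phi>" and sc: "supp_cond \<phi> c1 c2 D"
  shows "continuous_on UNIV (hfun \<phi> k)"
proof -
  have c: "0 < c1" "c1 \<le> c2" using supp_cond_pos[OF sc] by auto
  have a: "continuous_on {z. fst z < 0} (hfun \<phi> k)"
  proof -
    have "continuous_on {z::real \<times> 'a. fst z < 0} (\<lambda>z. complex_of_real ((- inverse (fst z)) ^ (k + 2)) *
       \<phi> ((- inverse (fst z)) *\<^sub>R snd z, - inverse (fst z)))"
      by (intro continuous_intros cont_comp_UNIV[OF c\<phi>]) auto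
    then show ?thesis by (rule continuous_on_cong[THEN iffD1, rotated 2]) (auto simp: hfun_def)
  qed
  have z: "hfun \<phi> k z = 0" if "fst z > - inverse c2" for z
  proof (cases "fst z < 0")
    case True
    then have "- inverse (fst z) > c2" using that c
      by (smt (verit) inverse_less_iff_less_neg inverse_minus_eq inverse_inverse_eq)
    then show ?thesis using True supp_condD(2)[OF sc] by (force simp: hfun_def)
  qed (simp add: hfun_def)
  have b: "continuous_on {z. fst z > - inverse c2} (hfun \<phi> k)"
    by (rule continuous_on_cong[THEN iffD1, OF refl _ continuous_on_const[of _ 0]]) (use z in auto)
  have o1: "open {z::real \<times> 'a. fst z < 0}" by (rule open_Collect_less) (auto intro: continuous_intros)
  have o2: "open {z::real \<times> 'a. fst z > - inverse c2}" by (rule open_Collect_less) (auto intro: continuous_intros)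
  have "continuous_on ({z. fst z < 0} \<union> {z. fst z > - inverse c2}) (hfun \<phi> k)"
    by (rule continuous_on_open_Un[OF o1 o2 a b])
  moreover have "{z::real \<times> 'a. fst z < 0} \<union> {z. fst z > - inverse c2} = UNIV"
  proof -
    have n: "- inverse c2 < 0" using c by simp
    have "z \<in> {z::real \<times> 'a. fst z < 0} \<union> {z. fst z > - inverse c2}" for z
    proof (cases "fst z < 0")
      case False then have "fst z > - inverse c2" using n by linarith
      then show ?thesis by simp
    qed simp
    then show ?thesis by blast
  qed
  ultimately show ?thesis by simp
qed

lemma hfun_supp:
  assumes sc: "supp_cond \<phi> c1 c2 D" and nz: "hfun \<phi> k (t, q) \<noteq> 0"
  shows "t < 0" "- inverse c1 \<le> t" "t \<le> - inverse c2" "norm q \<le> - D * t"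
proof -
  have c: "0 < c1" "c1 \<le> c2" "0 \<le> D" using supp_cond_pos[OF sc] by auto
  show t0: "t < 0" using nz by (simp add: hfun_def split: if_splits)
  then have nz': "\<phi> ((- inverse t) *\<^sub>R q, - inverse t) \<noteq> 0" using nz by (simp add: hfun_def)
  have s1: "c1 \<le> - inverse t" and s2: "- inverse t \<le> c2" and s3: "norm ((- inverse t) *\<^sub>R q) \<le> D"
    using supp_condD[OF sc nz'] by auto
  show "- inverse c1 \<le> t" using s1 t0 c
    by (smt (verit) inverse_le_iff_le_neg inverse_minus_eq inverse_inverse_eq)
  show "t \<le> - inverse c2" using s2 t0 c
    by (smt (verit) inverse_le_iff_le_neg inverse_minus_eq inverse_inverse_eq)
  have "norm ((- inverse t) *\<^sub>R q) = (- inverse t) * norm q" using t0 by simp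
  then have "(- inverse t) * norm q \<le> D" using s3 by simp
  then have "norm q \<le> D * (- t)" using t0
    by (simp add: field_simps)
  then show "norm q \<le> - D * t" by simp
qed

lemma main_identity:
  fixes \<phi> :: "'a::euclidean_space \<times> real \<Rightarrow> complex"
  assumes c\<phi>: "continuous_on UNIV \<phi>" and sc: "supp_cond \<phi> c1 c2 D"
  shows "(\<integral>p. exp (- \<i> * complex_of_real (p \<bullet> \<xi>)) * wfun \<phi> k a p \<partial>lborel) = fourier_full (hfun \<phi> k) (a \<bullet> \<xi>, \<xi>)"
proof -
  have c: "0 < c1" "c1 \<le> c2" "0 \<le> D" using supp_cond_pos[OF sc] by auto
  define \<sigma> where "\<sigma> = a \<bullet> \<xi>"
  define Fa where "Fa p s = exp (- \<i> * complex_of_real (p \<bullet> \<xi>)) * (\<phi> (a + s *\<^sub>R p, s) * complex_of_real s ^ k)" for p s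
  define K where "K q s = complex_of_real s ^ k * exp (\<i> * complex_of_real (\<sigma> * inverse s)) *
      exp (- \<i> * complex_of_real (q \<bullet> \<xi>)) * \<phi> (s *\<^sub>R q, s)" for q s
  define J where "J t q = exp (- \<i> * complex_of_real (t * \<sigma> + q \<bullet> \<xi>)) * hfun \<phi> k (t, q)" for t q
  have A: "(\<integral>p. exp (- \<i> * complex_of_real (p \<bullet> \<xi>)) * wfun \<phi> k a p \<partial>lborel) = (\<integral>p. \<integral>s. Fa p s \<partial>lborel \<partial>lborel)"
    by (simp add: Fa_def wfun_def)
  define R where "R = (D + norm a) / c1"
  have Fa_van: "Fa p s = 0" if "(p, s) \<notin> cball 0 R \<times> {c1..c2}" for p s
  proof (rule ccontr)
    assume "Fa p s \<noteq> 0"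
    then have nz: "\<phi> (a + s *\<^sub>R p, s) \<noteq> 0" by (auto simp: Fa_def)
    note d = supp_condD[OF sc nz]
    have s0: "s > 0" using d c by simp
    have "s * norm p \<le> D + norm a"
      using d(3) norm_triangle_ineq4[of "a + s *\<^sub>R p" a] s0 by simp
    then have "c1 * norm p \<le> D + norm a" using d(1) by (smt (verit) mult_right_mono norm_ge_zero)
    then have "norm p \<le> R" using c by (simp add: R_def field_simps)
    then show False using that d by auto
  qed
  have Fa_cont: "continuous_on UNIV (\<lambda>z. Fa (fst z) (snd z))"
    unfolding Fa_def by (intro continuous_intros cont_comp_UNIV[OF c\<phi>])
  have Fa_int: "integrable (lborel \<Otimes>\<^sub>M lborel) (\<lambda>(x, y). Fa x y)"
  proof -
    have "integrable lborel (\<lambda>z::'a \<times> real. Fa (fst z) (snd z))"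
      by (rule integrable_cont_cpt[OF Fa_cont, of "cball 0 R \<times> {c1..c2}"])
         (auto intro: compact_Times Fa_van[of "fst _" "snd _", simplified])
    then show ?thesis by (simp add: integrable_pair_lborel case_prod_beta')
  qed
  have B: "(\<integral>p. \<integral>s. Fa p s \<partial>lborel \<partial>lborel) = (\<integral>s. \<integral>p. Fa p s \<partial>lborel \<partial>lborel)"
    using lborel_pair.Fubini_integral[OF Fa_int] by simp
  have C: "(\<integral>p. Fa p s \<partial>lborel) = (\<integral>q. K q s \<partial>lborel)" for s
  proof (cases "s > 0")
    case False
    then have "Fa p s = 0" "K p s = 0" for p using supp_cond_zero[OF sc] c by (auto simp: Fa_def K_def)
    then show ?thesis by simp
  next
    case True
    have meas: "(\<lambda>p. Fa p s) \<in> borel_measurable borel"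
    proof (rule borel_measurable_continuous_onI)
      have "continuous_on UNIV ((\<lambda>z. Fa (fst z) (snd z)) \<circ> (\<lambda>p. (p, s)))"
        by (rule continuous_on_compose[OF _ continuous_on_subset[OF Fa_cont]]) (auto intro!: continuous_intros)
      then show "continuous_on UNIV (\<lambda>p. Fa p s)" by (simp add: o_def)
    qed
    have "(\<integral>q. Fa (q + (- inverse s *\<^sub>R a)) s \<partial>lborel) = (\<integral>p. Fa p s \<partial>lborel)"
      by (rule integral_translate[OF meas])
    moreover have "Fa (q + (- inverse s *\<^sub>R a)) s = K q s" for q
    proof -
      have e1: "a + s *\<^sub>R (q + (- inverse s *\<^sub>R a)) = s *\<^sub>R q" using True by (simp add: algebra_simps)
      have e2: "(q + (- inverse s *\<^sub>R a)) \<bullet> \<xi> = q \<bullet> \<xi> - inverse s * \<sigma>"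
        unfolding \<sigma>_def by (simp only: inner_add_left inner_scaleR_left)
      have e3: "exp (- \<i> * complex_of_real (q \<bullet> \<xi> - inverse s * \<sigma>)) =
          exp (\<i> * complex_of_real (\<sigma> * inverse s)) * exp (- \<i> * complex_of_real (q \<bullet> \<xi>))"
        by (simp add: exp_add[symmetric] algebra_simps)
      show ?thesis unfolding Fa_def K_def e1 e2 e3 by (simp add: algebra_simps)
    qed
    ultimately show ?thesis by simp
  qed
  have K_cont: "continuous_on UNIV (\<lambda>z. K (fst z) (snd z))"
  proof -
    have a1: "continuous_on {z::'a \<times> real. snd z > 0} (\<lambda>z. K (fst z) (snd z))"
      unfolding K_def by (intro continuous_intros cont_comp_UNIV[OF c\<phi>]) auto
    have a2: "continuous_on {z::'a \<times> real. snd z < c1} (\<lambda>z. K (fst z) (snd z))"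
      by (rule continuous_on_cong[THEN iffD1, OF refl _ continuous_on_const[of _ 0]])
         (use supp_cond_zero[OF sc] in \<open>auto simp: K_def\<close>)
    have o1: "open {z::'a \<times> real. snd z > 0}" by (rule open_Collect_less) (auto intro: continuous_intros)
    have o2: "open {z::'a \<times> real. snd z < c1}" by (rule open_Collect_less) (auto intro: continuous_intros)
    have "continuous_on ({z. snd z > 0} \<union> {z. snd z < c1}) (\<lambda>z. K (fst z) (snd z))"
      by (rule continuous_on_open_Un[OF o1 o2 a1 a2])
    moreover have "{z::'a \<times> real. snd z > 0} \<union> {z. snd z < c1} = UNIV"
    proof -
      have "z \<in> {z::'a \<times> real. snd z > 0} \<union> {z. snd z < c1}" for z
      proof (cases "snd z > 0")
        case False then have "snd z < c1" using c by linarith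
        then show ?thesis by simp
      qed simp
      then show ?thesis by blast
    qed
    ultimately show ?thesis by simp
  qed
  define R2 where "R2 = D / c1"
  have K_van: "K q s = 0" if "(q, s) \<notin> cball 0 R2 \<times> {c1..c2}" for q s
  proof (rule ccontr)
    assume "K q s \<noteq> 0"
    then have nz: "\<phi> (s *\<^sub>R q, s) \<noteq> 0" by (auto simp: K_def)
    note d = supp_condD[OF sc nz]
    have s0: "s > 0" using d c by simp
    have "s * norm q \<le> D" using d(3) s0 by simp
    then have "c1 * norm q \<le> D" using d(1) by (smt (verit) mult_right_mono norm_ge_zero)
    then have "norm q \<le> R2" using c by (simp add: R2_def field_simps)
    then show False using that d by auto
  qed
  have K_int: "integrable (lborel \<Otimes>\<^sub>M lborel) (\<lambda>(x, y). K x y)"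
  proof -
    have "integrable lborel (\<lambda>z::'a \<times> real. K (fst z) (snd z))"
      by (rule integrable_cont_cpt[OF K_cont, of "cball 0 R2 \<times> {c1..c2}"])
         (auto intro: compact_Times K_van[of "fst _" "snd _", simplified])
    then show ?thesis by (simp add: integrable_pair_lborel case_prod_beta')
  qed
  have D: "(\<integral>s. \<integral>q. K q s \<partial>lborel \<partial>lborel) = (\<integral>q. \<integral>s. K q s \<partial>lborel \<partial>lborel)"
    using lborel_pair.Fubini_integral[OF K_int] by simp
  have E: "(\<integral>s. K q s \<partial>lborel) = (\<integral>t. J t q \<partial>lborel)" for q
  proof -
    have cK: "continuous_on UNIV (K q)"
    proof -
      have "continuous_on UNIV ((\<lambda>z. K (fst z) (snd z)) \<circ> (\<lambda>s. (q, s)))"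
        by (rule continuous_on_compose[OF _ continuous_on_subset[OF K_cont]]) (auto intro!: continuous_intros)
      then show ?thesis by (simp add: o_def)
    qed
    have "(\<integral>s. K q s \<partial>lborel) = (\<integral>t. (if t < 0 then (inverse t)^2 *\<^sub>R K q (- inverse t) else 0) \<partial>lborel)"
      by (rule subst_inv[OF cK c(1,2)]) (use K_van in auto)
    moreover have "(if t < 0 then (inverse t)^2 *\<^sub>R K q (- inverse t) else 0) = J t q" for t
    proof (cases "t < 0")
      case True
      have i: "inverse (- inverse t) = - t" by simp
      have "(inverse t)^2 *\<^sub>R K q (- inverse t) = complex_of_real ((- inverse t) ^ (k + 2)) *
          exp (- \<i> * complex_of_real (t * \<sigma>)) * exp (- \<i> * complex_of_real (q \<bullet> \<xi>)) *
          \<phi> ((- inverse t) *\<^sub>R q, - inverse t)"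
        unfolding K_def i by (simp add: scaleR_conv_of_real power2_eq_square algebra_simps)
      also have "\<dots> = J t q"
        using True by (simp add: J_def hfun_def exp_add[symmetric] algebra_simps)
      finally show ?thesis using True by simp
    next
      case False then show ?thesis by (simp add: J_def hfun_def)
    qed
    ultimately show ?thesis by simp
  qed
  have J_cont: "continuous_on UNIV (\<lambda>z. J (fst z) (snd z))"
    unfolding J_def by (intro continuous_intros continuous_on_compose2[OF hfun_cont[OF c\<phi> sc]]) auto
  define R3 where "R3 = D * inverse c1"
  have J_van: "J t q = 0" if "(t, q) \<notin> {- inverse c1..- inverse c2} \<times> cball 0 R3" for t q
  proof (rule ccontr)
    assume "J t q \<noteq> 0"
    then have nz: "hfun \<phi> k (t, q) \<noteq> 0" by (auto simp: J_def)
    note d = hfun_supp[OF sc nz]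
    have "- t \<le> inverse c1" using d(2) by linarith
    then have "D * (- t) \<le> D * inverse c1" using c(3) by (rule mult_left_mono)
    then have "- D * t \<le> R3" unfolding R3_def by simp
    then have "norm q \<le> R3" using d(4) by simp
    then show False using that d by auto
  qed
  have J_int: "integrable (lborel \<Otimes>\<^sub>M lborel) (\<lambda>(x, y). J x y)"
  proof -
    have "integrable lborel (\<lambda>z::real \<times> 'a. J (fst z) (snd z))"
      by (rule integrable_cont_cpt[OF J_cont, of "{- inverse c1..- inverse c2} \<times> cball 0 R3"])
         (auto intro: compact_Times J_van[of "fst _" "snd _", simplified])
    then show ?thesis by (simp add: integrable_pair_lborel case_prod_beta')
  qed
  have F: "(\<integral>q. \<integral>t. J t q \<partial>lborel \<partial>lborel) = fourier_full (hfun \<phi> k) (a \<bullet> \<xi>, \<xi>)"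
  proof -
    have "(\<integral>q. \<integral>t. J t q \<partial>lborel \<partial>lborel) = (\<integral>z. (\<lambda>(x, y). J x y) z \<partial>(lborel \<Otimes>\<^sub>M lborel))"
      using lborel_pair.integral_snd[OF J_int] by simp
    also have "\<dots> = (\<integral>z. J (fst z) (snd z) \<partial>lborel)" by (simp add: lborel_prod case_prod_beta')
    also have "\<dots> = fourier_full (hfun \<phi> k) (a \<bullet> \<xi>, \<xi>)"
      by (simp add: fourier_full_def J_def \<sigma>_def mult.commute)
    finally show ?thesis .
  qed
  show ?thesis using A B C D E F by simp
qed

inductive trig :: "('a::euclidean_space \<Rightarrow> real) \<Rightarrow> bool" where
  tcos: "trig (\<lambda>p. c * cos (p \<bullet> w))"
| tsin: "trig (\<lambda>p. c * sin (p \<bullet> w))"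
| tadd: "trig f \<Longrightarrow> trig g \<Longrightarrow> trig (\<lambda>p. f p + g p)"

lemma trig_const: "trig (\<lambda>p. c)"
  using tcos[of c 0] by simp

lemma trig_cont: "trig f \<Longrightarrow> continuous_on UNIV f"
  by (induction rule: trig.induct) (auto intro!: continuous_intros)

lemma trig_mult_basic:
  assumes "trig f"
  shows "trig (\<lambda>p. f p * (d * cos (p \<bullet> v)))" "trig (\<lambda>p. f p * (d * sin (p \<bullet> v)))"
  using assms
proof (induction rule: trig.induct)
  case (tcos c w)
  {
    have eq: "(\<lambda>p. c * cos (p \<bullet> w) * (d * cos (p \<bullet> v))) =
        (\<lambda>p. (c * d / 2) * cos (p \<bullet> (w + v)) + (c * d / 2) * cos (p \<bullet> (w - v)))"
      by (rule ext) (simp add: inner_add_right inner_diff_right cos_add cos_diff algebra_simps)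
    show "trig (\<lambda>p. c * cos (p \<bullet> w) * (d * cos (p \<bullet> v)))" unfolding eq by (intro trig.tadd trig.tcos trig.tsin)
  next
    have eq: "(\<lambda>p. c * cos (p \<bullet> w) * (d * sin (p \<bullet> v))) =
        (\<lambda>p. (c * d / 2) * sin (p \<bullet> (w + v)) + (- (c * d / 2)) * sin (p \<bullet> (w - v)))"
      by (rule ext) (simp add: inner_add_right inner_diff_right sin_add sin_diff algebra_simps)
    show "trig (\<lambda>p. c * cos (p \<bullet> w) * (d * sin (p \<bullet> v)))" unfolding eq by (intro trig.tadd trig.tcos trig.tsin)
  }
next
  case (tsin c w)
  {
    have eq: "(\<lambda>p. c * sin (p \<bullet> w) * (d * cos (p \<bullet> v))) =
        (\<lambda>p. (c * d / 2) * sin (p \<bullet> (w + v)) + (c * d / 2) * sin (p \<bullet> (w - v)))"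
      by (rule ext) (simp add: inner_add_right inner_diff_right sin_add sin_diff algebra_simps)
    show "trig (\<lambda>p. c * sin (p \<bullet> w) * (d * cos (p \<bullet> v)))" unfolding eq by (intro trig.tadd trig.tcos trig.tsin)
  next
    have eq: "(\<lambda>p. c * sin (p \<bullet> w) * (d * sin (p \<bullet> v))) =
        (\<lambda>p. (c * d / 2) * cos (p \<bullet> (w - v)) + (- (c * d / 2)) * cos (p \<bullet> (w + v)))"
      by (rule ext) (simp add: inner_add_right inner_diff_right cos_add cos_diff algebra_simps)
    show "trig (\<lambda>p. c * sin (p \<bullet> w) * (d * sin (p \<bullet> v)))" unfolding eq by (intro trig.tadd trig.tcos trig.tsin)
  }
next
  case (tadd f g)
  {
    case 1
    have "(\<lambda>p. (f p + g p) * (d * cos (p \<bullet> v))) = (\<lambda>p. f p * (d * cos (p \<bullet> v)) + g p * (d * cos (p \<bullet> v)))"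
      by (rule ext) (simp add: algebra_simps)
    then show ?case using tadd.IH(1,3) by (simp add: trig.tadd)
  next
    case 2
    have "(\<lambda>p. (f p + g p) * (d * sin (p \<bullet> v))) = (\<lambda>p. f p * (d * sin (p \<bullet> v)) + g p * (d * sin (p \<bullet> v)))"
      by (rule ext) (simp add: algebra_simps)
    then show ?case using tadd.IH(2,4) by (simp add: trig.tadd)
  }
qed

lemma trig_mult: "trig g \<Longrightarrow> trig f \<Longrightarrow> trig (\<lambda>p. f p * g p)"
proof (induction rule: trig.induct)
  case (tcos c w) then show ?case by (rule trig_mult_basic)
next
  case (tsin c w) then show ?case by (rule trig_mult_basic)
next
  case (tadd g1 g2)
  have "(\<lambda>p. f p * (g1 p + g2 p)) = (\<lambda>p. f p * g1 p + f p * g2 p)" by (rule ext) (simp add: algebra_simps)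
  then show ?case using tadd by (simp add: trig.tadd)
qed

lemma cos_sin_sep:
  fixes x y :: "'a::euclidean_space"
  assumes "x \<noteq> y"
  shows "\<exists>f. trig f \<and> f x \<noteq> f y"
proof (rule ccontr)
  assume "\<not> ?thesis"
  then have eq: "\<And>f. trig f \<Longrightarrow> f x = f y" by blast
  define w where "w = (1 / (norm (x - y))^2) *\<^sub>R (x - y)"
  have n: "norm (x - y) \<noteq> 0" using assms by simp
  have xw: "x \<bullet> w - y \<bullet> w = 1"
  proof -
    have "x \<bullet> w - y \<bullet> w = (x - y) \<bullet> w" by (simp add: inner_diff_left)
    also have "\<dots> = (1 / (norm (x - y))^2) * ((x - y) \<bullet> (x - y))" by (simp add: w_def)
    also have "\<dots> = 1" using n by (simp add: power2_norm_eq_inner[symmetric])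
    finally show ?thesis .
  qed
  have c: "cos (x \<bullet> w) = cos (y \<bullet> w)" using eq[OF tcos[of 1 w]] by simp
  have s: "sin (x \<bullet> w) = sin (y \<bullet> w)" using eq[OF tsin[of 1 w]] by simp
  have "cos (x \<bullet> w - y \<bullet> w) = cos (y \<bullet> w) * cos (y \<bullet> w) + sin (y \<bullet> w) * sin (y \<bullet> w)"
    using c s by (simp add: cos_diff)
  also have "\<dots> = 1" using sin_cos_squared_add[of "y \<bullet> w"] by (simp add: power2_eq_square)
  finally have "cos 1 = (1::real)" using xw by simp
  then obtain n :: int where "1 = real_of_int n * 2 * pi" using cos_one_2pi_int by blast
  moreover have "real_of_int n * 2 * pi \<noteq> 1"
  proof (cases "n = 0")
    case False
    then have "\<bar>real_of_int n\<bar> \<ge> 1" by linarith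
    then have "\<bar>real_of_int n * 2 * pi\<bar> \<ge> 2 * pi"
      using pi_gt_zero by (simp add: abs_mult)
    then show ?thesis using pi_gt3 by auto
  qed simp
  ultimately show False by simp
qed

lemma real_uniq:
  fixes r :: "'a::euclidean_space \<Rightarrow> real"
  assumes cr: "continuous_on UNIV r" and K: "compact K" and van: "\<And>x. x \<notin> K \<Longrightarrow> r x = 0"
    and orth_c: "\<And>\<xi>. (\<integral>p. r p * cos (p \<bullet> \<xi>) \<partial>lborel) = 0"
    and orth_s: "\<And>\<xi>. (\<integral>p. r p * sin (p \<bullet> \<xi>) \<partial>lborel) = 0"
  shows "r x = 0"
proof -
  have intg: "integrable lborel (\<lambda>p. r p * g p)" if "continuous_on UNIV g" for g
    by (rule integrable_cont_cpt[OF _ K]) (use van that cr in \<open>auto intro!: continuous_intros\<close>)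
  have T0: "(\<integral>p. r p * f p \<partial>lborel) = 0" if "trig f" for f
    using that
  proof (induction rule: trig.induct)
    case (tcos c w)
    have "(\<integral>p. r p * (c * cos (p \<bullet> w)) \<partial>lborel) = (\<integral>p. c * (r p * cos (p \<bullet> w)) \<partial>lborel)"
      by (simp add: algebra_simps)
    also have "\<dots> = c * (\<integral>p. r p * cos (p \<bullet> w) \<partial>lborel)" by (rule integral_mult_right_zero)
    finally show ?case using orth_c by simp
  next
    case (tsin c w)
    have "(\<integral>p. r p * (c * sin (p \<bullet> w)) \<partial>lborel) = (\<integral>p. c * (r p * sin (p \<bullet> w)) \<partial>lborel)"
      by (simp add: algebra_simps)
    also have "\<dots> = c * (\<integral>p. r p * sin (p \<bullet> w) \<partial>lborel)" by (rule integral_mult_right_zero)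
    finally show ?case using orth_s by simp
  next
    case (tadd f g)
    have "(\<integral>p. r p * (f p + g p) \<partial>lborel) = (\<integral>p. r p * f p + r p * g p \<partial>lborel)"
      by (simp add: algebra_simps)
    also have "\<dots> = (\<integral>p. r p * f p \<partial>lborel) + (\<integral>p. r p * g p \<partial>lborel)"
      by (rule Bochner_Integration.integral_add[OF intg[OF trig_cont[OF tadd.hyps(1)]] intg[OF trig_cont[OF tadd.hyps(2)]]])
    finally show ?case using tadd.IH by simp
  qed
  define I where "I = (\<integral>p. \<bar>r p\<bar> \<partial>lborel)"
  have I0: "I \<ge> 0" unfolding I_def by simp
  have intabs: "integrable lborel (\<lambda>p. \<bar>r p\<bar>)"
    by (rule integrable_cont_cpt[OF _ K]) (use van cr in \<open>auto intro!: continuous_intros\<close>)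
  have bound: "(\<integral>p. r p * r p \<partial>lborel) \<le> e * I" if e: "e > 0" for e
  proof -
    obtain t where t: "trig t" "\<forall>x\<in>K. \<bar>r x - t x\<bar> < e"
    proof -
      have "\<exists>g. trig g \<and> (\<forall>x\<in>K. \<bar>r x - g x\<bar> < e)"
      proof (rule Stone_Weierstrass_HOL[of K trig])
        show "compact K" by (rule K)
        show "\<And>c. trig (\<lambda>x. c)" by (rule trig_const)
        show "\<And>f. trig f \<Longrightarrow> continuous_on K f" using trig_cont continuous_on_subset by blast
        show "\<And>f g. trig f \<and> trig g \<Longrightarrow> trig (\<lambda>x. f x + g x)" by (auto intro: trig.tadd)
        show "\<And>f g. trig f \<and> trig g \<Longrightarrow> trig (\<lambda>x. f x * g x)" using trig_mult by blast
        show "\<And>x y. x \<in> K \<and> y \<in> K \<and> x \<noteq> y \<Longrightarrow> \<exists>f. trig f \<and> f x \<noteq> f y" using cos_sin_sep by blast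
        show "continuous_on K r" using continuous_on_subset[OF cr] by blast
        show "0 < e" by (rule e)
      qed
      then show ?thesis using that by blast
    qed
    have it: "integrable lborel (\<lambda>p. r p * t p)" by (rule intg[OF trig_cont[OF t(1)]])
    have irt: "integrable lborel (\<lambda>p. r p * (r p - t p))"
      by (rule intg) (use cr trig_cont[OF t(1)] in \<open>auto intro!: continuous_intros\<close>)
    have "(\<integral>p. r p * r p \<partial>lborel) = (\<integral>p. r p * (r p - t p) + r p * t p \<partial>lborel)"
      by (simp add: algebra_simps)
    also have "\<dots> = (\<integral>p. r p * (r p - t p) \<partial>lborel) + (\<integral>p. r p * t p \<partial>lborel)"
      by (rule Bochner_Integration.integral_add[OF irt it])
    also have "\<dots> = (\<integral>p. r p * (r p - t p) \<partial>lborel)" using T0[OF t(1)] by simp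
    also have "\<dots> \<le> (\<integral>p. e * \<bar>r p\<bar> \<partial>lborel)"
    proof (rule integral_mono[OF irt])
      show "integrable lborel (\<lambda>p. e * \<bar>r p\<bar>)" using intabs by simp
      fix p
      show "r p * (r p - t p) \<le> e * \<bar>r p\<bar>"
      proof (cases "p \<in> K")
        case True
        have "r p * (r p - t p) \<le> \<bar>r p\<bar> * \<bar>r p - t p\<bar>" by (simp add: abs_mult[symmetric])
        also have "\<dots> \<le> \<bar>r p\<bar> * e" using t(2) True by (intro mult_left_mono) auto
        finally show ?thesis by (simp add: mult.commute)
      next
        case False then show ?thesis using van by simp
      qed
    qed
    also have "\<dots> = e * I" by (simp add: I_def)
    finally show ?thesis .
  qed
  have rr0: "(\<integral>p. r p * r p \<partial>lborel) \<ge> 0" by simp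
  have rr: "(\<integral>p. r p * r p \<partial>lborel) = 0"
  proof (rule ccontr)
    assume "(\<integral>p. r p * r p \<partial>lborel) \<noteq> 0"
    then have pos: "(\<integral>p. r p * r p \<partial>lborel) > 0" using rr0 by linarith
    define e where "e = (\<integral>p. r p * r p \<partial>lborel) / (I + 1)"
    have e: "e > 0" using pos I0 by (simp add: e_def)
    have "(\<integral>p. r p * r p \<partial>lborel) \<le> e * I" by (rule bound[OF e])
    also have "\<dots> < e * (I + 1)" using e by simp
    also have "\<dots> = (\<integral>p. r p * r p \<partial>lborel)" using I0 by (simp add: e_def)
    finally show False by simp
  qed
  have "AE p in lborel. r p * r p = 0"
    using integral_nonneg_eq_0_iff_AE[OF intg[OF cr]] rr by simp
  then have "r x * r x = 0" by (rule ae_zero_cont[rotated]) (use cr in \<open>auto intro!: continuous_intros\<close>)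
  then show ?thesis by simp
qed

lemma exp_neg_i: "exp (- \<i> * complex_of_real x) = complex_of_real (cos x) - \<i> * complex_of_real (sin x)"
proof -
  have "exp (- \<i> * complex_of_real x) = cis (- x)" by (simp add: cis_conv_exp)
  then show ?thesis by (simp add: complex_eq_iff)
qed

lemma exp_neg_i': "exp (- (\<i> * complex_of_real x)) = complex_of_real (cos x) - \<i> * complex_of_real (sin x)"
  using exp_neg_i[of x] by simp

lemma exp_pos_i: "exp (\<i> * complex_of_real x) = complex_of_real (cos x) + \<i> * complex_of_real (sin x)"
  using exp_neg_i[of "- x"] by simp

lemma fourier_uniq:
  fixes g :: "'a::euclidean_space \<Rightarrow> complex"
  assumes cg: "continuous_on UNIV g" and K: "compact K" and van: "\<And>x. x \<notin> K \<Longrightarrow> g x = 0"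
    and FT: "\<And>\<xi>. (\<integral>p. exp (- \<i> * complex_of_real (p \<bullet> \<xi>)) * g p \<partial>lborel) = 0"
  shows "g x = 0"
proof -
  define e where "e \<xi> p = exp (- \<i> * complex_of_real (p \<bullet> \<xi>))" for \<xi> p :: 'a
  have inte: "integrable lborel (\<lambda>p. e \<xi> p * g p)" for \<xi>
    by (rule integrable_cont_cpt[OF _ K]) (use van cg in \<open>auto intro!: continuous_intros simp: e_def\<close>)
  have FT': "(\<integral>p. e \<xi> p * g p \<partial>lborel) = 0" for \<xi> using FT by (simp add: e_def)
  have cosE: "complex_of_real (cos (p \<bullet> \<xi>)) = (e \<xi> p + e (- \<xi>) p) / 2" for p \<xi>
    by (simp add: e_def exp_neg_i exp_neg_i' exp_pos_i inner_minus_right)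
  have sinE: "complex_of_real (sin (p \<bullet> \<xi>)) = \<i> * (e \<xi> p - e (- \<xi>) p) / 2" for p \<xi>
    by (simp add: e_def exp_neg_i exp_neg_i' exp_pos_i inner_minus_right algebra_simps)
  have C: "(\<integral>p. complex_of_real (cos (p \<bullet> \<xi>)) * g p \<partial>lborel) = 0" for \<xi>
  proof -
    have "(\<integral>p. complex_of_real (cos (p \<bullet> \<xi>)) * g p \<partial>lborel) = (\<integral>p. (e \<xi> p * g p + e (- \<xi>) p * g p) / 2 \<partial>lborel)"
      by (simp add: cosE algebra_simps add_divide_distrib)
    also have "\<dots> = ((\<integral>p. e \<xi> p * g p \<partial>lborel) + (\<integral>p. e (- \<xi>) p * g p \<partial>lborel)) / 2"
      by (simp add: Bochner_Integration.integral_add[OF inte inte])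
    finally show ?thesis using FT' by simp
  qed
  have S: "(\<integral>p. complex_of_real (sin (p \<bullet> \<xi>)) * g p \<partial>lborel) = 0" for \<xi>
  proof -
    have "(\<integral>p. complex_of_real (sin (p \<bullet> \<xi>)) * g p \<partial>lborel) = (\<integral>p. \<i> * (e \<xi> p * g p - e (- \<xi>) p * g p) / 2 \<partial>lborel)"
      by (simp add: sinE algebra_simps diff_divide_distrib)
    also have "\<dots> = \<i> * ((\<integral>p. e \<xi> p * g p \<partial>lborel) - (\<integral>p. e (- \<xi>) p * g p \<partial>lborel)) / 2"
      by (simp add: Bochner_Integration.integral_diff[OF inte inte])
    finally show ?thesis using FT' by simp
  qed
  have intc: "integrable lborel (\<lambda>p. complex_of_real (f (p \<bullet> \<xi>)) * g p)" if "continuous_on UNIV f" for f \<xi>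
    by (rule integrable_cont_cpt[OF _ K]) (use van cg that in \<open>auto intro!: continuous_intros intro: continuous_on_compose2[OF that]\<close>)
  have re: "Re (g x) = 0"
  proof (rule real_uniq[OF _ K])
    show "continuous_on UNIV (\<lambda>p. Re (g p))" using cg by (auto intro!: continuous_intros)
    show "\<And>x. x \<notin> K \<Longrightarrow> Re (g x) = 0" using van by simp
    fix \<xi>
    have "(\<integral>p. Re (g p) * cos (p \<bullet> \<xi>) \<partial>lborel) = (\<integral>p. Re (complex_of_real (cos (p \<bullet> \<xi>)) * g p) \<partial>lborel)"
      by (simp add: mult.commute)
    also have "\<dots> = Re (\<integral>p. complex_of_real (cos (p \<bullet> \<xi>)) * g p \<partial>lborel)"
      by (rule integral_Re[OF intc]) (auto intro: continuous_intros)
    finally show "(\<integral>p. Re (g p) * cos (p \<bullet> \<xi>) \<partial>lborel) = 0" using C by simp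
    have "(\<integral>p. Re (g p) * sin (p \<bullet> \<xi>) \<partial>lborel) = (\<integral>p. Re (complex_of_real (sin (p \<bullet> \<xi>)) * g p) \<partial>lborel)"
      by (simp add: mult.commute)
    also have "\<dots> = Re (\<integral>p. complex_of_real (sin (p \<bullet> \<xi>)) * g p \<partial>lborel)"
      by (rule integral_Re[OF intc]) (auto intro: continuous_intros)
    finally show "(\<integral>p. Re (g p) * sin (p \<bullet> \<xi>) \<partial>lborel) = 0" using S by simp
  qed
  have im: "Im (g x) = 0"
  proof (rule real_uniq[OF _ K])
    show "continuous_on UNIV (\<lambda>p. Im (g p))" using cg by (auto intro!: continuous_intros)
    show "\<And>x. x \<notin> K \<Longrightarrow> Im (g x) = 0" using van by simp
    fix \<xi>
    have "(\<integral>p. Im (g p) * cos (p \<bullet> \<xi>) \<partial>lborel) = (\<integral>p. Im (complex_of_real (cos (p \<bullet> \<xi>)) * g p) \<partial>lborel)"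
      by (simp add: mult.commute)
    also have "\<dots> = Im (\<integral>p. complex_of_real (cos (p \<bullet> \<xi>)) * g p \<partial>lborel)"
      by (rule integral_Im[OF intc]) (auto intro: continuous_intros)
    finally show "(\<integral>p. Im (g p) * cos (p \<bullet> \<xi>) \<partial>lborel) = 0" using C by simp
    have "(\<integral>p. Im (g p) * sin (p \<bullet> \<xi>) \<partial>lborel) = (\<integral>p. Im (complex_of_real (sin (p \<bullet> \<xi>)) * g p) \<partial>lborel)"
      by (simp add: mult.commute)
    also have "\<dots> = Im (\<integral>p. complex_of_real (sin (p \<bullet> \<xi>)) * g p \<partial>lborel)"
      by (rule integral_Im[OF intc]) (auto intro: continuous_intros)
    finally show "(\<integral>p. Im (g p) * sin (p \<bullet> \<xi>) \<partial>lborel) = 0" using S by simp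
  qed
  show ?thesis using re im by (simp add: complex_eq_iff)
qed

lemma cont_preimage_borel:
  fixes f :: "'x::topological_space \<Rightarrow> 'y::topological_space"
  assumes "continuous_on UNIV f" "A \<in> sets borel"
  shows "f -` A \<in> sets borel"
  by (rule measurable_sets_borel[OF borel_measurable_continuous_onI[OF assms(1)] assms(2)])

lemma sets_lborel_pair:
  "sets (lborel \<Otimes>\<^sub>M (lborel :: 'y::euclidean_space measure)) = sets (borel :: ('x::euclidean_space \<times> 'y) measure)"
  by (simp only: lborel_prod sets_lborel)

lemma affine_null:
  fixes M :: "real set"
  assumes c: "c \<noteq> 0" and M: "M \<in> null_sets lborel"
  shows "{r::real. t + c * r \<in> M} \<in> null_sets lborel"
proof -
  have Mb: "M \<in> sets borel" using M by (simp add: null_sets_def)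
  define f where "f = (\<lambda>r::real. t + c * r)"
  have fm: "f \<in> measurable lborel borel" unfolding f_def by simp
  have pre: "{r::real. t + c * r \<in> M} = f -` M" by (auto simp: f_def)
  have meas: "f -` M \<in> sets lborel"
    using measurable_sets[OF fm Mb] by simp
  have "emeasure lborel M = emeasure (density (distr lborel borel f) (\<lambda>_. ennreal \<bar>c\<bar>)) M"
    using arg_cong[OF lborel_real_affine[OF c, of t], of "\<lambda>m. emeasure m M"] by (simp add: f_def)
  also have "\<dots> = ennreal \<bar>c\<bar> * emeasure (distr lborel borel f) M"
    by (rule emeasure_density_const) (simp add: Mb)
  also have "\<dots> = ennreal \<bar>c\<bar> * emeasure lborel (f -` M)"
    using emeasure_distr[OF fm Mb] by simp
  finally have "ennreal \<bar>c\<bar> * emeasure lborel (f -` M) = 0" using null_setsD1[OF M] by simp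
  then have "emeasure lborel (f -` M) = 0" using c by simp
  then show ?thesis using meas pre by (simp add: null_sets_def)
qed

lemma emeasure_translate:
  fixes A :: "'e::euclidean_space set"
  assumes A: "A \<in> sets borel"
  shows "emeasure lborel ((\<lambda>x. x + v) -` A) = emeasure lborel A"
proof -
  have fm: "((+) v) \<in> measurable lborel borel" by simp
  have "emeasure lborel A = emeasure (distr lborel borel ((+) v)) A" by (simp add: lborel_distr_plus)
  also have "\<dots> = emeasure lborel ((+) v -` A)" using emeasure_distr[OF fm A] by simp
  also have "(+) v -` A = (\<lambda>x. x + v) -` A" by (auto simp: add.commute)
  finally show ?thesis by simp
qed

lemma hyper_null:
  fixes \<xi> :: "'a::euclidean_space" and M :: "real set"
  assumes \<xi>: "\<xi> \<noteq> 0" and M: "M \<in> null_sets lborel"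
  shows "{a::'a. a \<bullet> \<xi> \<in> M} \<in> null_sets lborel"
proof -
  have Mb: "M \<in> sets borel" using M by (simp add: null_sets_def)
  define A where "A = {a::'a. a \<bullet> \<xi> \<in> M}"
  have Ab: "A \<in> sets borel"
  proof -
    have "(\<lambda>a::'a. a \<bullet> \<xi>) -` M \<in> sets borel"
      by (rule cont_preimage_borel[OF _ Mb]) (auto intro: continuous_intros)
    then show ?thesis by (simp add: A_def vimage_def)
  qed
  define c where "c = \<xi> \<bullet> \<xi>"
  have c: "c \<noteq> 0" using \<xi> by (simp add: c_def)
  define Z where "Z = {z::'a \<times> real. (fst z + snd z *\<^sub>R \<xi>) \<bullet> \<xi> \<in> M}"
  have Zb: "Z \<in> sets (lborel \<Otimes>\<^sub>M lborel)"
  proof -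
    have "(\<lambda>z::'a \<times> real. (fst z + snd z *\<^sub>R \<xi>) \<bullet> \<xi>) -` M \<in> sets borel"
      by (rule cont_preimage_borel[OF _ Mb]) (auto intro!: continuous_intros)
    then show ?thesis unfolding sets_lborel_pair by (simp add: Z_def vimage_def)
  qed
  have "emeasure (lborel \<Otimes>\<^sub>M lborel) Z = (\<integral>\<^sup>+ a. emeasure lborel (Pair a -` Z) \<partial>(lborel::'a measure))"
    by (rule lborel.emeasure_pair_measure_alt[OF Zb])
  also have "\<dots> = (\<integral>\<^sup>+ a. 0 \<partial>(lborel::'a measure))"
  proof (rule nn_integral_cong)
    fix a :: 'a
    have "Pair a -` Z = {r. a \<bullet> \<xi> + c * r \<in> M}"
      by (auto simp: Z_def c_def inner_add_left mult.commute)
    then show "emeasure lborel (Pair a -` Z) = 0"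
      using affine_null[OF c M, of "a \<bullet> \<xi>"] by (simp add: null_sets_def)
  qed
  finally have Z0: "emeasure (lborel \<Otimes>\<^sub>M lborel) Z = 0" by simp
  have "emeasure (lborel \<Otimes>\<^sub>M lborel) Z = (\<integral>\<^sup>+ r. emeasure lborel ((\<lambda>x. (x, r)) -` Z) \<partial>(lborel::real measure))"
    by (rule lborel_pair.emeasure_pair_measure_alt2[OF Zb])
  also have "\<dots> = (\<integral>\<^sup>+ r. emeasure lborel A \<partial>(lborel::real measure))"
  proof (rule nn_integral_cong)
    fix r :: real
    have "(\<lambda>x. (x, r)) -` Z = (\<lambda>x. x + r *\<^sub>R \<xi>) -` A" by (auto simp: Z_def A_def)
    then show "emeasure lborel ((\<lambda>x. (x, r)) -` Z) = emeasure lborel A"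
      using emeasure_translate[OF Ab] by simp
  qed
  also have "\<dots> = emeasure lborel A * \<infinity>" by (simp add: emeasure_lborel_UNIV)
  finally have "emeasure lborel A * \<infinity> = 0" using Z0 by simp
  then have "emeasure lborel A = 0" by simp
  then show ?thesis using Ab by (simp add: null_sets_def A_def)
qed

lemma E_null:
  fixes N :: "(real \<times> 'a::euclidean_space) set"
  assumes N: "N \<in> null_sets lborel"
  shows "{z::'a \<times> 'a. (fst z \<bullet> snd z, snd z) \<in> N} \<in> null_sets (lborel \<Otimes>\<^sub>M lborel)"
proof -
  have Nb: "N \<in> sets borel" using N by (simp add: null_sets_def)
  have Np: "N \<in> sets (lborel \<Otimes>\<^sub>M lborel)" using Nb unfolding sets_lborel_pair by simp
  define E where "E = {z::'a \<times> 'a. (fst z \<bullet> snd z, snd z) \<in> N}"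
  have Eb: "E \<in> sets (lborel \<Otimes>\<^sub>M lborel)"
  proof -
    have "(\<lambda>z::'a \<times> 'a. (fst z \<bullet> snd z, snd z)) -` N \<in> sets borel"
      by (rule cont_preimage_borel[OF _ Nb]) (auto intro!: continuous_intros)
    then show ?thesis unfolding sets_lborel_pair by (simp add: E_def vimage_def)
  qed
  have "emeasure (lborel \<Otimes>\<^sub>M lborel) N = 0" using N by (simp add: lborel_prod null_sets_def)
  then have "(\<integral>\<^sup>+ \<xi>. emeasure lborel ((\<lambda>x. (x, \<xi>)) -` N) \<partial>(lborel::'a measure)) = 0"
    using lborel_pair.emeasure_pair_measure_alt2[OF Np] by simp
  then have ae1: "AE \<xi> in (lborel::'a measure). emeasure lborel ((\<lambda>x. (x, \<xi>)) -` N) = 0"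
    using nn_integral_0_iff_AE[OF lborel_pair.measurable_emeasure_Pair2[OF Np]] by simp
  have ae2: "AE \<xi> in (lborel::'a measure). \<xi> \<noteq> 0" by (rule AE_lborel_singleton)
  have "AE \<xi> in (lborel::'a measure). emeasure lborel ((\<lambda>x. (x, \<xi>)) -` E) = 0"
    using ae1 ae2
  proof eventually_elim
    case (elim \<xi>)
    have sl: "(\<lambda>x. (x, \<xi>)) -` N \<in> null_sets lborel"
      using elim(1) sets_Pair2[OF Np] by (simp add: null_sets_def)
    have "{a::'a. a \<bullet> \<xi> \<in> (\<lambda>x. (x, \<xi>)) -` N} \<in> null_sets lborel"
      by (rule hyper_null[OF elim(2) sl])
    moreover have "(\<lambda>x. (x, \<xi>)) -` E = {a::'a. a \<bullet> \<xi> \<in> (\<lambda>x. (x, \<xi>)) -` N}" by (auto simp: E_def)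
    ultimately show ?case by (simp add: null_sets_def)
  qed
  then have "(\<integral>\<^sup>+ \<xi>. emeasure lborel ((\<lambda>x. (x, \<xi>)) -` E) \<partial>(lborel::'a measure)) = 0"
    using nn_integral_0_iff_AE[OF lborel_pair.measurable_emeasure_Pair2[OF Eb]] by simp
  then have "emeasure (lborel \<Otimes>\<^sub>M lborel) E = 0"
    using lborel_pair.emeasure_pair_measure_alt2[OF Eb] by simp
  then show ?thesis using Eb by (simp add: null_sets_def E_def)
qed

lemma norm_p1_pos: "norm (p, 1::real) > 0"
proof -
  have "(p, 1::real) \<noteq> 0" by (simp add: zero_prod_def)
  then show ?thesis by simp
qed

lemma hemi_snd: "snd (hemi_point p) = 1 / norm (p, 1::real)"
  by (simp add: hemi_point_def)

lemma hemi_in: "hemi_point p \<in> upper_hemisphere"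
  using norm_p1_pos[of p] by (simp del: scaleR_Pair add: hemi_point_def upper_hemisphere_def)

lemma hemi_inv:
  assumes "v \<in> upper_hemisphere"
  shows "hemi_point ((1 / snd v) *\<^sub>R fst v) = v"
proof -
  obtain w t where v: "v = (w, t)" by (cases v)
  have t: "t > 0" and n: "norm (w, t) = 1" using assms by (auto simp: upper_hemisphere_def v)
  have e: "((1 / t) *\<^sub>R w, 1::real) = (1 / t) *\<^sub>R (w, t)" using t by simp
  have "norm ((1 / t) *\<^sub>R w, 1::real) = 1 / t" unfolding e using n t by (simp del: scaleR_Pair)
  then have "hemi_point ((1 / t) *\<^sub>R w) = (1 / (1 / t)) *\<^sub>R ((1 / t) *\<^sub>R (w, t))"
    unfolding hemi_point_def e[symmetric] by simp
  also have "\<dots> = (w, t)" using t by (simp only: scaleR_scaleR) simp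
  finally show ?thesis using v by simp
qed

lemma beam_hemi:
  fixes f :: "'a::euclidean_space \<times> real \<Rightarrow> real"
  assumes van: "\<And>y s. s \<le> 0 \<Longrightarrow> f (y, s) = 0"
  shows "beam_transform k f (a, 0) (hemi_point p) =
     norm (p, 1::real) ^ (k + 1) * (\<integral>s. f (a + s *\<^sub>R p, s) * s ^ k \<partial>lborel)"
proof -
  define N where "N = norm (p, 1::real)"
  have N: "N > 0" using norm_p1_pos by (simp add: N_def)
  define g where "g r = f ((a, 0) + r *\<^sub>R hemi_point p) * r ^ k" for r
  have "beam_transform k f (a, 0) (hemi_point p) = (\<integral>r. indicator {0..} r *\<^sub>R g r \<partial>lborel)"
    by (simp add: beam_transform_def set_lebesgue_integral_def g_def)
  also have "\<dots> = (\<integral>r. g r \<partial>lborel)"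
  proof (rule Bochner_Integration.integral_cong[OF refl])
    fix r :: real
    show "indicator {0..} r *\<^sub>R g r = g r"
    proof (cases "r \<ge> 0")
      case False
      have "snd ((a, 0) + r *\<^sub>R hemi_point p) \<le> 0"
        using False N by (simp add: hemi_point_def N_def[symmetric] divide_nonpos_pos)
      then have "f (fst ((a, 0) + r *\<^sub>R hemi_point p), snd ((a, 0) + r *\<^sub>R hemi_point p)) = 0"
        by (rule van)
      then have "g r = 0" unfolding g_def by (simp only: prod.collapse mult_zero_left)
      then show ?thesis by simp
    qed simp
  qed
  also have "\<dots> = \<bar>N\<bar> *\<^sub>R (\<integral>x. g (0 + N * x) \<partial>lborel)"
    by (rule lborel_integral_real_affine) (use N in simp)
  also have "\<dots> = N * (\<integral>x. N ^ k * (f (a + x *\<^sub>R p, x) * x ^ k) \<partial>lborel)"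
  proof -
    have "g (0 + N * x) = N ^ k * (f (a + x *\<^sub>R p, x) * x ^ k)" for x
    proof -
      have "(a, 0) + (N * x) *\<^sub>R hemi_point p = (a + x *\<^sub>R p, x)"
        using N by (simp add: hemi_point_def N_def[symmetric])
      then show ?thesis by (simp add: g_def power_mult_distrib)
    qed
    then show ?thesis using N by simp
  qed
  also have "\<dots> = N ^ (k + 1) * (\<integral>s. f (a + s *\<^sub>R p, s) * s ^ k \<partial>lborel)"
    by simp
  finally show ?thesis by (simp add: N_def)
qed

lemma proj_data_eq:
  fixes f :: "'a::euclidean_space \<times> real \<Rightarrow> real"
  assumes van: "\<And>y s. s \<le> 0 \<Longrightarrow> f (y, s) = 0"
    and u: "\<And>v. v \<in> upper_hemisphere \<Longrightarrow> u a v = beam_transform k f (a, 0) v"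
  shows "proj_data k u a p = (\<integral>s. f (a + s *\<^sub>R p, s) * s ^ k \<partial>lborel)"
proof -
  define N where "N = norm (p, 1::real)"
  have N: "N > 0" using norm_p1_pos by (simp add: N_def)
  define I where "I = (\<integral>s. f (a + s *\<^sub>R p, s) * s ^ k \<partial>lborel)"
  have ub: "u a (hemi_point p) = N ^ (k + 1) * I"
    using u[OF hemi_in] beam_hemi[of f, OF van] by (simp add: N_def I_def)
  have "proj_data k u a p = (1 / N) ^ (k + 1) * (N ^ (k + 1) * I)"
    unfolding proj_data_def hemi_snd ub N_def by simp
  also have "\<dots> = I"
    using N by (simp add: power_one_over field_simps)
  finally show ?thesis by (simp add: I_def)
qed

lemma wfun_real:
  "complex_of_real (\<integral>s. f (a + s *\<^sub>R p, s) * s ^ k \<partial>lborel) = wfun (\<lambda>z. complex_of_real (f z)) k a p"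
  unfolding wfun_def integral_complex_of_real[symmetric] by simp

lemma Cc_cont:
  fixes f :: "'a::euclidean_space \<times> real \<Rightarrow> real"
  assumes "Cc_inf_half f"
  shows "continuous_on UNIV f"
proof -
  have sm: "smooth_on upper_half f" and K: "compact (tsupp f)" "tsupp f \<subseteq> upper_half"
    using assms by (auto simp: Cc_inf_half_def)
  have o: "open (upper_half :: ('a \<times> real) set)" by (rule open_upper_half)
  have c1: "continuous_on upper_half f" by (rule smooth_continuous[OF sm])
  have oK: "open (- tsupp f)" unfolding tsupp_def by (rule open_Compl[OF closed_closure])
  have z: "f x = 0" if "x \<notin> tsupp f" for x
  proof (rule ccontr)
    assume "f x \<noteq> 0"
    then have "x \<in> {x. f x \<noteq> 0}" by simp
    then have "x \<in> tsupp f" unfolding tsupp_def using closure_subset[of "{x. f x \<noteq> 0}"] by (rule subsetD[rotated])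
    then show False using that by simp
  qed
  have c2: "continuous_on (- tsupp f) f"
    by (rule continuous_on_cong[THEN iffD1, OF refl _ continuous_on_const[of _ 0]]) (simp add: z)
  have "continuous_on (upper_half \<union> - tsupp f) f" by (rule continuous_on_open_Un[OF o oK c1 c2])
  moreover have "upper_half \<union> - tsupp f = UNIV" using K(2) by auto
  ultimately show ?thesis by simp
qed

lemma Cc_supp:
  fixes f :: "'a::euclidean_space \<times> real \<Rightarrow> real"
  assumes "Cc_inf_half f"
  shows "\<exists>c1 c2 D. supp_cond (\<lambda>z. complex_of_real (f z)) c1 c2 D \<and> D > 0"
proof -
  have K: "compact (tsupp f)" "tsupp f \<subseteq> upper_half"
    using assms by (auto simp: Cc_inf_half_def)
  have inK: "x \<in> tsupp f" if "f x \<noteq> 0" for x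
  proof -
    have "x \<in> {x. f x \<noteq> 0}" using that by simp
    then show ?thesis unfolding tsupp_def using closure_subset[of "{x. f x \<noteq> 0}"] by (rule subsetD[rotated])
  qed
  show ?thesis
  proof (cases "tsupp f = {}")
    case True
    then have "f x = 0" for x using inK by blast
    then have "supp_cond (\<lambda>z. complex_of_real (f z)) 1 1 1" by (simp add: supp_cond_def)
    then show ?thesis by force
  next
    case False
    obtain x0 where x0: "x0 \<in> tsupp f" "\<forall>y\<in>tsupp f. snd x0 \<le> snd y"
    proof -
      have "continuous_on (tsupp f) (snd :: 'a \<times> real \<Rightarrow> real)" by (intro continuous_intros)
      from continuous_attains_inf[OF K(1) False this] show ?thesis using that by blast
    qed
    have c1: "snd x0 > 0" using x0(1) K(2) by (auto simp: upper_half_def)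
    obtain B where B: "B > 0" "\<forall>x\<in>tsupp f. norm x \<le> B"
      using compact_imp_bounded[OF K(1)] bounded_pos by blast
    have "supp_cond (\<lambda>z. complex_of_real (f z)) (snd x0) (max (snd x0) B) B"
      unfolding supp_cond_def
    proof (intro conjI allI impI)
      show "0 < snd x0" by (rule c1)
      show "snd x0 \<le> max (snd x0) B" by simp
      show "0 \<le> B" using B by simp
      fix y s assume "complex_of_real (f (y, s)) \<noteq> 0"
      then have m: "(y, s) \<in> tsupp f" using inK by simp
      show "snd x0 \<le> s" using x0(2) m by force
      have nb: "norm (y, s) \<le> B" using B(2) m by blast
      have "s \<le> norm s" by simp
      also have "\<dots> \<le> norm (y, s)" by (rule norm_snd_le)
      finally show "s \<le> max (snd x0) B" using nb by simp
      show "norm y \<le> B" using norm_fst_le[of y s] nb by simp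
    qed
    then show ?thesis using B by blast
  qed
qed

lemma closed_Sset: "closed {(t, p::'a::euclidean_space). t \<in> {- M0..- m0} \<and> norm p \<le> - R * t}"
proof -
  have "{(t, p::'a). t \<in> {- M0..- m0} \<and> norm p \<le> - R * t} =
      {z. - M0 \<le> fst z} \<inter> {z. fst z \<le> - m0} \<inter> {z. norm (snd z) \<le> - R * fst z}" by auto
  moreover have "closed ({z::real \<times> 'a. - M0 \<le> fst z} \<inter> {z. fst z \<le> - m0} \<inter> {z. norm (snd z) \<le> - R * fst z})"
    by (intro closed_Int closed_Collect_le) (auto intro!: continuous_intros)
  ultimately show ?thesis by simp
qed

lemma wfun_van:
  assumes sc: "supp_cond \<phi> c1 c2 D" and nz: "wfun \<phi> k a p \<noteq> 0"
  shows "norm p \<le> (D + norm a) / c1"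
proof (rule ccontr)
  assume np: "\<not> ?thesis"
  have c: "0 < c1" "c1 \<le> c2" "0 \<le> D" using supp_cond_pos[OF sc] by auto
  have "\<phi> (a + s *\<^sub>R p, s) = 0" for s
  proof (rule ccontr)
    assume z: "\<phi> (a + s *\<^sub>R p, s) \<noteq> 0"
    note d = supp_condD[OF sc z]
    have s0: "s > 0" using d c by simp
    have "s * norm p \<le> D + norm a"
      using d(3) norm_triangle_ineq4[of "a + s *\<^sub>R p" a] s0 by simp
    then have "c1 * norm p \<le> D + norm a" using d(1) by (smt (verit) mult_right_mono norm_ge_zero)
    then have "norm p \<le> (D + norm a) / c1" using c by (simp add: field_simps)
    then show False using np by simp
  qed
  then have "wfun \<phi> k a p = 0" by (simp add: wfun_def)
  then show False using nz by simp
qed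

lemma wfun_cont_p:
  fixes \<phi> :: "'a::euclidean_space \<times> real \<Rightarrow> complex"
  assumes c\<phi>: "continuous_on UNIV \<phi>" and sc: "supp_cond \<phi> c1 c2 D"
  shows "continuous_on UNIV (wfun \<phi> k a)"
proof -
  have "continuous_on UNIV (\<lambda>p. \<integral>s. (\<lambda>p s. \<phi> (a + s *\<^sub>R p, s) * complex_of_real s ^ k) p s \<partial>lborel)"
  proof (rule param_cont[OF _ compact_Icc[of c1 c2]])
    show "continuous_on UNIV (\<lambda>z::'a \<times> real. \<phi> (a + snd z *\<^sub>R fst z, snd z) * complex_of_real (snd z) ^ k)"
      by (intro continuous_intros cont_comp_UNIV[OF c\<phi>])
    fix x :: 'a and y :: real assume "y \<notin> {c1..c2}"
    then show "\<phi> (a + y *\<^sub>R x, y) * complex_of_real y ^ k = 0"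
      using supp_condD[OF sc, of "a + y *\<^sub>R x" y] by force
  qed
  then show ?thesis by (simp add: wfun_def[abs_def])
qed

lemma wfun_cont_a:
  fixes \<phi> :: "'a::euclidean_space \<times> real \<Rightarrow> complex"
  assumes c\<phi>: "continuous_on UNIV \<phi>" and sc: "supp_cond \<phi> c1 c2 D"
  shows "continuous_on UNIV (\<lambda>a. wfun \<phi> k a p)"
proof -
  have "continuous_on UNIV (\<lambda>a. \<integral>s. (\<lambda>a s. \<phi> (a + s *\<^sub>R p, s) * complex_of_real s ^ k) a s \<partial>lborel)"
  proof (rule param_cont[OF _ compact_Icc[of c1 c2]])
    show "continuous_on UNIV (\<lambda>z::'a \<times> real. \<phi> (fst z + snd z *\<^sub>R p, snd z) * complex_of_real (snd z) ^ k)"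
      by (intro continuous_intros cont_comp_UNIV[OF c\<phi>])
    fix x :: 'a and y :: real assume "y \<notin> {c1..c2}"
    then show "\<phi> (x + y *\<^sub>R p, y) * complex_of_real y ^ k = 0"
      using supp_condD[OF sc, of "x + y *\<^sub>R p" y] by force
  qed
  then show ?thesis by (simp add: wfun_def)
qed

lemma FT_cont:
  fixes g :: "'a::euclidean_space \<Rightarrow> complex"
  assumes cg: "continuous_on UNIV g" and K: "compact K" and van: "\<And>x. x \<notin> K \<Longrightarrow> g x = 0"
  shows "continuous_on UNIV (\<lambda>\<xi>. \<integral>p. exp (- \<i> * complex_of_real (p \<bullet> \<xi>)) * g p \<partial>lborel)"
proof -
  have "continuous_on UNIV (\<lambda>\<xi>. \<integral>p. (\<lambda>\<xi> p. exp (- \<i> * complex_of_real (p \<bullet> \<xi>)) * g p) \<xi> p \<partial>lborel)"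
  proof (rule param_cont[OF _ K])
    show "continuous_on UNIV (\<lambda>z::'a \<times> 'a. exp (- \<i> * complex_of_real (snd z \<bullet> fst z)) * g (snd z))"
      by (intro continuous_intros cont_comp_UNIV[OF cg])
  qed (use van in simp)
  then show ?thesis by simp
qed

lemma forward_dir:
  fixes k :: nat and u :: "'a::euclidean_space \<Rightarrow> 'a \<times> real \<Rightarrow> real" and f :: "'a \<times> real \<Rightarrow> real"
  assumes f: "Cc_inf_half f" and rel: "\<forall>a v. v \<in> upper_hemisphere \<longrightarrow> u a v = beam_transform k f (a, 0) v"
  shows "(\<forall>a. compact (tsupp (proj_data k u a))) \<and>
          (\<exists>H :: real \<times> 'a \<Rightarrow> complex.
             (\<forall>a xi. fourier_p (proj_data k u) a xi = H (a \<bullet> xi, xi)) \<and>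
             (\<exists>(h :: real \<times> 'a \<Rightarrow> complex) m0 M0 R.
                smooth_on UNIV h \<and> inv_fourier_of h H \<and>
                0 < m0 \<and> m0 < M0 \<and> 0 < R \<and>
                tsupp h \<subseteq> {(t, p). t \<in> {-M0..-m0} \<and> norm p \<le> - R * t}))"
proof -
  define \<phi> where "\<phi> = (\<lambda>z. complex_of_real (f z))"
  have cf: "continuous_on UNIV f" by (rule Cc_cont[OF f])
  have c\<phi>: "continuous_on UNIV \<phi>" unfolding \<phi>_def by (intro continuous_intros cf)
  obtain c1 c2 D where sc: "supp_cond \<phi> c1 c2 D" and D: "D > 0"
    using Cc_supp[OF f] unfolding \<phi>_def by blast
  have c: "0 < c1" "c1 \<le> c2" using supp_cond_pos[OF sc] by auto
  have fz: "f (y, s) = 0" if "s \<le> 0" for y s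
  proof (rule ccontr)
    assume "f (y, s) \<noteq> 0"
    then have "\<phi> (y, s) \<noteq> 0" by (simp add: \<phi>_def)
    then have "c1 \<le> s" by (rule supp_condD(1)[OF sc])
    then show False using that c by simp
  qed
  have fz2: "f (y, s) = 0" if "s > c2" for y s
  proof (rule ccontr)
    assume "f (y, s) \<noteq> 0"
    then have "\<phi> (y, s) \<noteq> 0" by (simp add: \<phi>_def)
    then have "s \<le> c2" by (rule supp_condD(2)[OF sc])
    then show False using that by simp
  qed
  have pd: "proj_data k u a p = (\<integral>s. f (a + s *\<^sub>R p, s) * s ^ k \<partial>lborel)" for a p
    by (rule proj_data_eq[of f]) (use fz rel in auto)
  have pdc: "complex_of_real (proj_data k u a p) = wfun \<phi> k a p" for a p
    unfolding pd \<phi>_def by (rule wfun_real)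
  have part1: "compact (tsupp (proj_data k u a))" for a
  proof -
    have "{p. proj_data k u a p \<noteq> 0} \<subseteq> cball 0 ((D + norm a) / c1)"
    proof
      fix p assume "p \<in> {p. proj_data k u a p \<noteq> 0}"
      then have "wfun \<phi> k a p \<noteq> 0" using pdc[of a p] by auto
      then show "p \<in> cball 0 ((D + norm a) / c1)" using wfun_van[OF sc] by simp
    qed
    then have sub: "tsupp (proj_data k u a) \<subseteq> cball 0 ((D + norm a) / c1)"
      unfolding tsupp_def by (rule closure_minimal) simp
    show ?thesis unfolding compact_eq_bounded_closed
      using bounded_subset[OF bounded_cball sub] by (simp add: tsupp_def)
  qed
  define h where "h = hfun \<phi> k"
  define H where "H = fourier_full h"
  have part2: "fourier_p (proj_data k u) a xi = H (a \<bullet> xi, xi)" for a xi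
  proof -
    have "fourier_p (proj_data k u) a xi = (\<integral>p. exp (- \<i> * complex_of_real (p \<bullet> xi)) * wfun \<phi> k a p \<partial>lborel)"
      unfolding fourier_p_def pdc by simp
    also have "\<dots> = fourier_full (hfun \<phi> k) (a \<bullet> xi, xi)" by (rule main_identity[OF c\<phi> sc])
    finally show ?thesis by (simp add: H_def h_def)
  qed
  have hsm: "smooth_on UNIV h"
  proof -
    have sm: "smooth_on upper_half f" using f by (simp add: Cc_inf_half_def)
    have c2: "0 < c2" using c by simp
    have "smooth_on UNIV (\<lambda>z::real \<times> 'a. complex_of_real (if fst z < 0 then (- inverse (fst z)) ^ (k + 2) *
            f ((- inverse (fst z)) *\<^sub>R snd z, - inverse (fst z)) else 0))"
      by (rule smooth_linear[OF bounded_linear_of_real fwd_h_smooth[OF sm c2 fz2]])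
    moreover have "(\<lambda>z::real \<times> 'a. complex_of_real (if fst z < 0 then (- inverse (fst z)) ^ (k + 2) *
            f ((- inverse (fst z)) *\<^sub>R snd z, - inverse (fst z)) else 0)) = h"
      by (rule ext) (simp add: h_def hfun_def \<phi>_def)
    ultimately show ?thesis by simp
  qed
  have hinv: "inv_fourier_of h H" by (simp add: inv_fourier_of_def H_def)
  define m0 where "m0 = 1 / (2 * c2)"
  define M0 where "M0 = 1 / c1"
  have m0: "0 < m0" "m0 < M0" using c by (auto simp: m0_def M0_def field_simps)
  have sup: "tsupp h \<subseteq> {(t, p). t \<in> {-M0..-m0} \<and> norm p \<le> - D * t}"
    unfolding tsupp_def
  proof (rule closure_minimal[OF _ closed_Sset])
    show "{x. h x \<noteq> 0} \<subseteq> {(t, p). t \<in> {-M0..-m0} \<and> norm p \<le> - D * t}"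
    proof
      fix z assume "z \<in> {x. h x \<noteq> 0}"
      then obtain t q where z: "z = (t, q)" and nz: "hfun \<phi> k (t, q) \<noteq> 0"
        by (cases z) (auto simp: h_def)
      note hs = hfun_supp[OF sc nz]
      have "- inverse c2 \<le> - m0" using c by (simp add: m0_def field_simps)
      then show "z \<in> {(t, p). t \<in> {-M0..-m0} \<and> norm p \<le> - D * t}"
        using hs z by (auto simp: M0_def inverse_eq_divide)
    qed
  qed
  show ?thesis using part1 part2 hsm hinv m0 D sup by blast
qed

lemma converse_dir:
  fixes k :: nat and u :: "'a::euclidean_space \<Rightarrow> 'a \<times> real \<Rightarrow> real"
    and H h :: "real \<times> 'a \<Rightarrow> complex"
  assumes us: "smooth_on_hemi u"
    and comp: "\<forall>a. compact (tsupp (proj_data k u a))"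
    and HW: "\<forall>a xi. fourier_p (proj_data k u) a xi = H (a \<bullet> xi, xi)"
    and hs: "smooth_on UNIV h" and hinv: "inv_fourier_of h H"
    and m: "0 < m0" "m0 < M0" "0 < R"
    and sup: "tsupp h \<subseteq> {(t, p). t \<in> {-M0..-m0} \<and> norm p \<le> - R * t}"
  shows "\<exists>f. Cc_inf_half f \<and> (\<forall>a v. v \<in> upper_hemisphere \<longrightarrow> u a v = beam_transform k f (a, 0) v)"
proof -
  have hz: "fst z \<in> {-M0..-m0} \<and> norm (snd z) \<le> - R * fst z" if "h z \<noteq> 0" for z
  proof -
    have "z \<in> {x. h x \<noteq> 0}" using that by simp
    then have "z \<in> tsupp h" unfolding tsupp_def using closure_subset[of "{x. h x \<noteq> 0}"] by (rule subsetD[rotated])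
    then have "z \<in> {(t, p). t \<in> {-M0..-m0} \<and> norm p \<le> - R * t}" using sup by (rule subsetD[rotated])
    then show ?thesis by (cases z) simp
  qed
  have ch: "continuous_on UNIV h" by (rule smooth_continuous[OF hs])
  define \<phi> where "\<phi> z = (if snd z > 0 then complex_of_real (inverse (snd z) ^ (k + 2)) *
      h (- inverse (snd z), inverse (snd z) *\<^sub>R fst z) else 0)" for z :: "'a \<times> real"
  have M0: "0 < M0" using m by simp
  have sc: "supp_cond \<phi> (1 / M0) (1 / m0) R"
    unfolding supp_cond_def
  proof (intro conjI allI impI)
    show "0 < 1 / M0" using M0 by simp
    show "1 / M0 \<le> 1 / m0" using m by (simp add: frac_le)
    show "0 \<le> R" using m by simp
    fix y s assume nz: "\<phi> (y, s) \<noteq> 0"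
    then have s0: "s > 0" by (simp add: \<phi>_def split: if_splits)
    then have "h (- inverse s, inverse s *\<^sub>R y) \<noteq> 0" using nz by (simp add: \<phi>_def)
    from hz[OF this] have h1: "inverse s \<le> M0" and h2: "m0 \<le> inverse s"
      and h3: "norm (inverse s *\<^sub>R y) \<le> R * inverse s" by auto
    show "1 / M0 \<le> s" using h1 s0 M0 by (simp add: field_simps)
    show "s \<le> 1 / m0" using h2 s0 m by (simp add: field_simps)
    have "inverse s * norm y \<le> inverse s * R" using h3 s0 by (simp add: mult.commute)
    then show "norm y \<le> R" using s0 by simp
  qed
  have c\<phi>: "continuous_on UNIV \<phi>"
  proof -
    have a1: "continuous_on {z::'a \<times> real. snd z > 0} \<phi>"
    proof -
      have "continuous_on {z::'a \<times> real. snd z > 0} (\<lambda>z. complex_of_real (inverse (snd z) ^ (k + 2)) *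
          h (- inverse (snd z), inverse (snd z) *\<^sub>R fst z))"
        by (intro continuous_intros cont_comp_UNIV[OF ch]) auto
      then show ?thesis by (rule continuous_on_cong[THEN iffD1, rotated 2]) (auto simp: \<phi>_def)
    qed
    have z: "\<phi> z = 0" if "snd z < 1 / M0" for z
    proof (rule ccontr)
      assume "\<phi> z \<noteq> 0"
      then have "\<phi> (fst z, snd z) \<noteq> 0" by simp
      then have "1 / M0 \<le> snd z" by (rule supp_condD(1)[OF sc])
      then show False using that by simp
    qed
    have a2: "continuous_on {z::'a \<times> real. snd z < 1 / M0} \<phi>"
      by (rule continuous_on_cong[THEN iffD1, OF refl _ continuous_on_const[of _ 0]]) (simp add: z)
    have o1: "open {z::'a \<times> real. snd z > 0}" by (rule open_Collect_less) (auto intro: continuous_intros)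
    have o2: "open {z::'a \<times> real. snd z < 1 / M0}" by (rule open_Collect_less) (auto intro: continuous_intros)
    have "continuous_on ({z. snd z > 0} \<union> {z. snd z < 1 / M0}) \<phi>"
      by (rule continuous_on_open_Un[OF o1 o2 a1 a2])
    moreover have "{z::'a \<times> real. snd z > 0} \<union> {z. snd z < 1 / M0} = UNIV"
    proof -
      have "z \<in> {z::'a \<times> real. snd z > 0} \<union> {z. snd z < 1 / M0}" for z
      proof (cases "snd z > 0")
        case False then have "snd z < 1 / M0" using M0 by (smt (verit) divide_pos_pos)
        then show ?thesis by simp
      qed simp
      then show ?thesis by blast
    qed
    ultimately show ?thesis by simp
  qed
  have hh: "hfun \<phi> k = h"
  proof
    fix z :: "real \<times> 'a"
    obtain t q where zq: "z = (t, q)" by (cases z)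
    show "hfun \<phi> k z = h z"
    proof (cases "t < 0")
      case True
      define s where "s = - inverse t"
      have s0: "s > 0" using True by (simp add: s_def)
      have iv: "inverse s = - t" by (simp add: s_def)
      have e1: "- inverse s = t" by (simp add: iv)
      have e2: "inverse s *\<^sub>R (s *\<^sub>R q) = q" using s0 by simp
      have "\<phi> (s *\<^sub>R q, s) = complex_of_real (inverse s ^ (k + 2)) * h (t, q)"
        using s0 by (simp add: \<phi>_def e1 e2)
      then have "hfun \<phi> k (t, q) = complex_of_real (s ^ (k + 2)) * (complex_of_real (inverse s ^ (k + 2)) * h (t, q))"
        using True by (simp add: hfun_def s_def)
      also have "\<dots> = complex_of_real ((s * inverse s) ^ (k + 2)) * h (t, q)"
        by (simp add: power_mult_distrib)
      also have "\<dots> = h (t, q)" using s0 by simp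
      finally show ?thesis using zq by simp
    next
      case False
      have "h (t, q) = 0"
      proof (rule ccontr)
        assume "h (t, q) \<noteq> 0"
        from hz[OF this] have "t \<le> - m0" by simp
        then show False using False m by simp
      qed
      then show ?thesis using False zq by (simp add: hfun_def)
    qed
  qed
  define f where "f z = (if snd z > 0 then Re (complex_of_real (inverse (snd z) ^ (k + 2)) *
      h (- inverse (snd z), inverse (snd z) *\<^sub>R fst z)) else 0)" for z :: "'a \<times> real"
  have fRe: "f z = Re (\<phi> z)" for z by (simp add: f_def \<phi>_def)
  have fsm: "smooth_on upper_half f" unfolding f_def[abs_def] by (rule conv_f_smooth[OF hs])
  define Kc where "Kc = cball (0::'a) R \<times> {1 / M0..1 / m0}"
  have fK: "{z. f z \<noteq> 0} \<subseteq> Kc"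
  proof
    fix z assume "z \<in> {z. f z \<noteq> 0}"
    then have "\<phi> (fst z, snd z) \<noteq> 0" using fRe[of z] by auto
    note d = supp_condD[OF sc this]
    then show "z \<in> Kc" by (cases z) (simp add: Kc_def)
  qed
  have Kc: "compact Kc" unfolding Kc_def by (intro compact_Times compact_cball compact_Icc)
  have KcU: "Kc \<subseteq> upper_half"
  proof
    fix z assume "z \<in> Kc"
    then have a: "snd z \<ge> 1 / M0" by (auto simp: Kc_def)
    have b: "1 / M0 > 0" using M0 by simp
    have "snd z > 0" using a b by linarith
    then show "z \<in> upper_half" by (simp add: upper_half_def)
  qed
  have tK: "tsupp f \<subseteq> Kc" unfolding tsupp_def by (rule closure_minimal[OF fK compact_imp_closed[OF Kc]])
  have Cc: "Cc_inf_half f"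
    unfolding Cc_inf_half_def
  proof (intro conjI fsm)
    show "compact (tsupp f)" unfolding compact_eq_bounded_closed
      using bounded_subset[OF compact_imp_bounded[OF Kc] tK] by (simp add: tsupp_def)
    show "tsupp f \<subseteq> upper_half" using tK KcU by blast
  qed
  have fz: "f (y, s) = 0" if "s \<le> 0" for y s using that by (simp add: f_def)
  define w where "w = proj_data k u"
  have cU: "continuous_on UNIV (\<lambda>z::'a \<times> 'a. u (fst z) (hemi_point (snd z)))"
  proof -
    have "smooth_on UNIV (\<lambda>(a, p). u a (hemi_point p))" using us by (simp add: smooth_on_hemi_def)
    then have "continuous_on UNIV (\<lambda>(a, p). u a (hemi_point p))" by (rule smooth_continuous)
    then show ?thesis by (simp add: case_prod_beta')
  qed
  have cw: "continuous_on UNIV (\<lambda>z::'a \<times> 'a. w (fst z) (snd z))"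
  proof -
    have "continuous_on UNIV (\<lambda>z::'a \<times> 'a. (1 / norm (snd z, 1::real)) ^ (k + 1) * u (fst z) (hemi_point (snd z)))"
      by (intro continuous_intros cU) (use norm_p1_pos in \<open>auto simp: less_imp_neq[symmetric]\<close>)
    then show ?thesis by (simp add: w_def proj_data_def hemi_snd)
  qed
  have cwa: "continuous_on UNIV (w a)" for a
  proof -
    have "continuous_on UNIV ((\<lambda>z. w (fst z) (snd z)) \<circ> (\<lambda>p. (a, p)))"
      by (rule continuous_on_compose[OF _ continuous_on_subset[OF cw]]) (auto intro!: continuous_intros)
    then show ?thesis by (simp add: o_def)
  qed
  have cwp: "continuous_on UNIV (\<lambda>a. w a p)" for p
  proof -
    have "continuous_on UNIV ((\<lambda>z. w (fst z) (snd z)) \<circ> (\<lambda>a. (a, p)))"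
      by (rule continuous_on_compose[OF _ continuous_on_subset[OF cw]]) (auto intro!: continuous_intros)
    then show ?thesis by (simp add: o_def)
  qed
  have wz: "w a p = 0" if "p \<notin> tsupp (w a)" for a p
  proof (rule ccontr)
    assume "w a p \<noteq> 0"
    then have "p \<in> {x. w a x \<noteq> 0}" by simp
    then have "p \<in> tsupp (w a)" unfolding tsupp_def using closure_subset[of "{x. w a x \<noteq> 0}"] by (rule subsetD[rotated])
    then show False using that by simp
  qed
  define Ka where "Ka a = tsupp (w a) \<union> cball 0 ((R + norm a) / (1 / M0))" for a
  have Ka: "compact (Ka a)" for a unfolding Ka_def using comp by (auto simp: w_def intro!: compact_Un)
  define g where "g a p = complex_of_real (w a p) - wfun \<phi> k a p" for a p
  have cg: "continuous_on UNIV (g a)" for a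
    unfolding g_def[abs_def] by (intro continuous_intros cwa wfun_cont_p[OF c\<phi> sc])
  have wfz: "wfun \<phi> k a p = 0" if "p \<notin> Ka a" for a p
    using wfun_van[OF sc, of k a p] that by (auto simp: Ka_def)
  have gz: "g a p = 0" if "p \<notin> Ka a" for a p
    using wz[of p a] wfz[OF that] that by (simp add: g_def Ka_def)
  have int1: "integrable lborel (\<lambda>p. exp (- \<i> * complex_of_real (p \<bullet> \<xi>)) * complex_of_real (w a p))" for a \<xi>
    by (rule integrable_cont_cpt[OF _ Ka[of a]]) (use wz cwa in \<open>auto intro!: continuous_intros simp: Ka_def\<close>)
  have int2: "integrable lborel (\<lambda>p. exp (- \<i> * complex_of_real (p \<bullet> \<xi>)) * wfun \<phi> k a p)" for a \<xi>
    by (rule integrable_cont_cpt[OF _ Ka[of a]]) (use wfz wfun_cont_p[OF c\<phi> sc] in \<open>auto intro!: continuous_intros\<close>)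
  have FTg: "(\<integral>p. exp (- \<i> * complex_of_real (p \<bullet> \<xi>)) * g a p \<partial>lborel) = H (a \<bullet> \<xi>, \<xi>) - fourier_full h (a \<bullet> \<xi>, \<xi>)" for a \<xi>
  proof -
    have "(\<integral>p. exp (- \<i> * complex_of_real (p \<bullet> \<xi>)) * g a p \<partial>lborel) =
        (\<integral>p. exp (- \<i> * complex_of_real (p \<bullet> \<xi>)) * complex_of_real (w a p) - exp (- \<i> * complex_of_real (p \<bullet> \<xi>)) * wfun \<phi> k a p \<partial>lborel)"
      by (simp add: g_def algebra_simps)
    also have "\<dots> = (\<integral>p. exp (- \<i> * complex_of_real (p \<bullet> \<xi>)) * complex_of_real (w a p) \<partial>lborel) -
        (\<integral>p. exp (- \<i> * complex_of_real (p \<bullet> \<xi>)) * wfun \<phi> k a p \<partial>lborel)"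
      by (rule Bochner_Integration.integral_diff[OF int1 int2])
    also have "\<dots> = H (a \<bullet> \<xi>, \<xi>) - fourier_full h (a \<bullet> \<xi>, \<xi>)"
      using HW main_identity[OF c\<phi> sc, of \<xi> k a] unfolding hh by (simp add: fourier_p_def w_def)
    finally show ?thesis .
  qed
  obtain N where N: "N \<in> null_sets lborel" and NH: "\<And>z. H z \<noteq> fourier_full h z \<Longrightarrow> z \<in> N"
  proof -
    have "AE z in lborel. H z = fourier_full h z" using hinv by (simp add: inv_fourier_of_def)
    then obtain N where "{x \<in> space lborel. \<not> H x = fourier_full h x} \<subseteq> N" "emeasure lborel N = 0" "N \<in> sets lborel"
      by (rule AE_E)
    then show ?thesis using that by (auto simp: null_sets_def)
  qed
  have AEpair: "AE z in lborel \<Otimes>\<^sub>M lborel. (fst z \<bullet> snd z, snd z) \<notin> N"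
    by (rule AE_I'[OF E_null[OF N]]) auto
  have AEa: "AE a in lborel. AE \<xi> in lborel. (a \<bullet> \<xi>, \<xi>) \<notin> N"
    using lborel_pair.AE_pair[OF AEpair] by simp
  have AEg: "AE a in lborel. \<forall>p. g a p = 0"
    using AEa
  proof (rule eventually_mono)
    fix a assume ae: "AE \<xi> in lborel. (a \<bullet> \<xi>, \<xi>) \<notin> N"
    have ae2: "AE \<xi> in lborel. (\<integral>p. exp (- \<i> * complex_of_real (p \<bullet> \<xi>)) * g a p \<partial>lborel) = 0"
      using ae
    proof (rule eventually_mono)
      fix \<xi> assume "(a \<bullet> \<xi>, \<xi>) \<notin> N"
      then have "H (a \<bullet> \<xi>, \<xi>) = fourier_full h (a \<bullet> \<xi>, \<xi>)" using NH by blast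
      then show "(\<integral>p. exp (- \<i> * complex_of_real (p \<bullet> \<xi>)) * g a p \<partial>lborel) = 0" using FTg by simp
    qed
    have all: "(\<integral>p. exp (- \<i> * complex_of_real (p \<bullet> \<xi>)) * g a p \<partial>lborel) = 0" for \<xi>
      by (rule ae_zero_cont[OF FT_cont[OF cg Ka gz] ae2])
    show "\<forall>p. g a p = 0"
      using fourier_uniq[OF cg Ka gz all] by blast
  qed
  have MC: "complex_of_real (w a p) = wfun \<phi> k a p" for a p
  proof -
    have ae: "AE a in lborel. g a p = 0" using AEg by (rule eventually_mono) simp
    have "continuous_on UNIV (\<lambda>a. g a p)"
      unfolding g_def by (intro continuous_intros cwp wfun_cont_a[OF c\<phi> sc])
    from ae_zero_cont[OF this ae] show ?thesis by (simp add: g_def)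
  qed
  have rel: "u a v = beam_transform k f (a, 0) v" if v: "v \<in> upper_hemisphere" for a v
  proof -
    define p where "p = (1 / snd v) *\<^sub>R fst v"
    have vp: "v = hemi_point p" using hemi_inv[OF v] by (simp add: p_def)
    define N where "N = norm (p, 1::real)"
    have Npos: "N > 0" using norm_p1_pos by (simp add: N_def)
    have intc: "integrable lborel (\<lambda>s. \<phi> (a + s *\<^sub>R p, s) * complex_of_real s ^ k)"
    proof (rule integrable_cont_cpt[OF _ compact_Icc[of "1 / M0" "1 / m0"]])
      show "continuous_on UNIV (\<lambda>s. \<phi> (a + s *\<^sub>R p, s) * complex_of_real s ^ k)"
        by (intro continuous_intros cont_comp_UNIV[OF c\<phi>])
      fix s assume "s \<notin> {1 / M0..1 / m0}"
      then show "\<phi> (a + s *\<^sub>R p, s) * complex_of_real s ^ k = 0"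
        using supp_condD[OF sc, of "a + s *\<^sub>R p" s] by force
    qed
    have I: "(\<integral>s. f (a + s *\<^sub>R p, s) * s ^ k \<partial>lborel) = w a p"
    proof -
      have "(\<integral>s. f (a + s *\<^sub>R p, s) * s ^ k \<partial>lborel) = (\<integral>s. Re (\<phi> (a + s *\<^sub>R p, s) * complex_of_real s ^ k) \<partial>lborel)"
        by (simp add: fRe of_real_power[symmetric] del: of_real_power)
      also have "\<dots> = Re (wfun \<phi> k a p)" unfolding wfun_def by (rule integral_Re[OF intc])
      also have "\<dots> = w a p" using MC[of a p] by (metis Re_complex_of_real)
      finally show ?thesis .
    qed
    have "w a p = (1 / N) ^ (k + 1) * u a (hemi_point p)"
      by (simp add: w_def proj_data_def hemi_snd N_def)
    then have "u a (hemi_point p) = N ^ (k + 1) * w a p" using Npos by (simp add: field_simps power_one_over)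
    also have "\<dots> = beam_transform k f (a, 0) (hemi_point p)"
      using beam_hemi[of f, OF fz, of k a p] I by (simp add: N_def)
    finally show ?thesis using vp by simp
  qed
  show ?thesis using Cc rel by blast
qed

theorem mainTheorem5:
  fixes k :: nat and u :: "'a::euclidean_space \<Rightarrow> 'a \<times> real \<Rightarrow> real"
  assumes "smooth_on_hemi u"
  shows "(\<exists>f. Cc_inf_half f \<and>
            (\<forall>a v. v \<in> upper_hemisphere \<longrightarrow> u a v = beam_transform k f (a, 0) v))
     \<longleftrightarrow>
         ((\<forall>a. compact (tsupp (proj_data k u a))) \<and>
          (\<exists>H :: real \<times> 'a \<Rightarrow> complex.
             (\<forall>a xi. fourier_p (proj_data k u) a xi = H (a \<bullet> xi, xi)) \<and>
             (\<exists>(h :: real \<times> 'a \<Rightarrow> complex) m0 M0 R.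
                smooth_on UNIV h \<and> inv_fourier_of h H \<and>
                0 < m0 \<and> m0 < M0 \<and> 0 < R \<and>
                tsupp h \<subseteq> {(t, p). t \<in> {-M0..-m0} \<and> norm p \<le> - R * t})))"
proof
  assume "\<exists>f. Cc_inf_half f \<and>
            (\<forall>a v. v \<in> upper_hemisphere \<longrightarrow> u a v = beam_transform k f (a, 0) v)"
  then obtain f where f: "Cc_inf_half f"
    and rel: "\<forall>a v. v \<in> upper_hemisphere \<longrightarrow> u a v = beam_transform k f (a, 0) v" by blast
  show "(\<forall>a. compact (tsupp (proj_data k u a))) \<and>
          (\<exists>H :: real \<times> 'a \<Rightarrow> complex.
             (\<forall>a xi. fourier_p (proj_data k u) a xi = H (a \<bullet> xi, xi)) \<and>
             (\<exists>(h :: real \<times> 'a \<Rightarrow> complex) m0 M0 R.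
                smooth_on UNIV h \<and> inv_fourier_of h H \<and>
                0 < m0 \<and> m0 < M0 \<and> 0 < R \<and>
                tsupp h \<subseteq> {(t, p). t \<in> {-M0..-m0} \<and> norm p \<le> - R * t}))"
    by (rule forward_dir[OF f rel])
next
  assume R: "(\<forall>a. compact (tsupp (proj_data k u a))) \<and>
          (\<exists>H :: real \<times> 'a \<Rightarrow> complex.
             (\<forall>a xi. fourier_p (proj_data k u) a xi = H (a \<bullet> xi, xi)) \<and>
             (\<exists>(h :: real \<times> 'a \<Rightarrow> complex) m0 M0 R.
                smooth_on UNIV h \<and> inv_fourier_of h H \<and>
                0 < m0 \<and> m0 < M0 \<and> 0 < R \<and>
                tsupp h \<subseteq> {(t, p). t \<in> {-M0..-m0} \<and> norm p \<le> - R * t}))"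
  then obtain H :: "real \<times> 'a \<Rightarrow> complex" and h :: "real \<times> 'a \<Rightarrow> complex" and m0 M0 R
    where comp: "\<forall>a. compact (tsupp (proj_data k u a))"
      and HW: "\<forall>a xi. fourier_p (proj_data k u) a xi = H (a \<bullet> xi, xi)"
      and hs: "smooth_on UNIV h" and hinv: "inv_fourier_of h H"
      and m: "0 < m0" "m0 < M0" "0 < R"
      and sup: "tsupp h \<subseteq> {(t, p). t \<in> {-M0..-m0} \<and> norm p \<le> - R * t}"
    by blast
  show "\<exists>f. Cc_inf_half f \<and>
            (\<forall>a v. v \<in> upper_hemisphere \<longrightarrow> u a v = beam_transform k f (a, 0) v)"
    by (rule converse_dir[OF assms comp HW hs hinv m sup])
qed

end
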